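(* Let $(M,\varphi,\xi,\eta,g)$ be a $(2n+1)$-dimensional Sasaki-like almost contact B-metric manifold admitting a Ricci-like soliton with potential $\xi$ and constants $(\lambda,\mu,\nu)$. Then the manifold is locally Ricci symmetric (i.e. $\nabla\rho=0$) if and only if $(\lambda,\mu,\nu)=(-2n,1,-1)$, i.e. if and only if it is an Einstein manifold.
   Context: An almost contact B-metric manifold $(M,\varphi,\xi,\eta,g)$ is a $(2n+1)$-dimensional manifold with a $(1,1)$-tensor $\varphi$, a vector field $\xi$, a 1-form $\eta$ and a pseudo-Riemannian metric $g$ of signature $(n+1,n)$ such that $\varphi\xi=0$, $\varphi^2=-\mathrm{Id}+\eta\otimes\xi$, $\eta\circ\varphi=0$, $\eta(\xi)=1$, and $g(\varphi x,\varphi y)=-g(x,y)+\eta(x)\eta(y)$. The associated B-metric is $\tilde g(x,y)=g(x,\varphi y)+\eta(x)\eta(y)$. With $\nabla$ the Levi-Civita connection of $g$, the manifold is Sasaki-like if $(\nabla_x\varphi)y=-g(x,y)\xi-\eta(y)x+2\eta(x)\eta(y)\xi$. Let $\rho$ be the Ricci tensor of $g$. It admits a Ricci-like soliton with potential vector field $v$ and constants $(\lambda,\mu,\nu)$ if $\frac12\mathcal L_v g+\rho+\lambda g+\mu\tilde g+\nu\,\eta\otimes\eta=0$, where $\mathcal L$ is the Lie derivative. The manifold is Einstein if $\rho$ is a constant multiple of $g$. *)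

theory Defs
  imports "HOL-Analysis.Analysis"
begin

text \<open>Local coordinate formulation: a chart domain U (open subset of real^'m)
 and all tensor fields given by their component functions.
 Index conventions: G p i j = g_ij, Phi p k j = phi^k_j, Xi p k = xi^k, Eta p i = eta_i.\<close>

definition pd :: "(real^'m \<Rightarrow> real) \<Rightarrow> 'm \<Rightarrow> real^'m \<Rightarrow> real" where
  "pd f i p = deriv (\<lambda>t. f (p + t *\<^sub>R axis i 1)) 0"

fun Ck :: "nat \<Rightarrow> (real^'m) set \<Rightarrow> (real^'m \<Rightarrow> real) \<Rightarrow> bool" where
  "Ck 0 U f = continuous_on U f"
| "Ck (Suc k) U f = (f differentiable_on U \<and> (\<forall>i. Ck k U (pd f i)))"

definition smooth_chart :: "(real^'m) set \<Rightarrow> (real^'m \<Rightarrow> real) \<Rightarrow> bool" where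
  "smooth_chart U f \<longleftrightarrow> (\<forall>k. Ck k U f)"

definition kdelta :: "'m \<Rightarrow> 'm \<Rightarrow> real" where
  "kdelta i j = (if i = j then 1 else 0)"

definition bil :: "('m \<Rightarrow> 'm \<Rightarrow> real) \<Rightarrow> real^'m \<Rightarrow> real^'m \<Rightarrow> real" where
  "bil A x y = (\<Sum>i\<in>UNIV. \<Sum>j\<in>UNIV. x$i * A i j * y$j)"

definition has_signature :: "('m::finite \<Rightarrow> 'm \<Rightarrow> real) \<Rightarrow> nat \<Rightarrow> nat \<Rightarrow> bool" where
  "has_signature A p q \<longleftrightarrow> (\<exists>e :: 'm \<Rightarrow> real^'m.
      (\<forall>i j. i \<noteq> j \<longrightarrow> bil A (e i) (e j) = 0) \<and>
      (\<forall>i. bil A (e i) (e i) = 1 \<or> bil A (e i) (e i) = -1) \<and>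
      card {i. bil A (e i) (e i) = 1} = p \<and> card {i. bil A (e i) (e i) = -1} = q)"

definition metric_inv :: "(real^'m \<Rightarrow> 'm \<Rightarrow> 'm \<Rightarrow> real) \<Rightarrow> real^'m \<Rightarrow> 'm \<Rightarrow> 'm \<Rightarrow> real" where
  "metric_inv G p k l = matrix_inv (\<chi> i j. G p i j) $ k $ l"

definition christoffel :: "(real^'m::finite \<Rightarrow> 'm \<Rightarrow> 'm \<Rightarrow> real) \<Rightarrow> real^'m \<Rightarrow> 'm \<Rightarrow> 'm \<Rightarrow> 'm \<Rightarrow> real" where
  "christoffel G p k i j = (1/2) * (\<Sum>l\<in>UNIV. metric_inv G p k l *
      (pd (\<lambda>q. G q l j) i p + pd (\<lambda>q. G q l i) j p - pd (\<lambda>q. G q i j) l p))"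

text \<open>Ricci tensor rho(y,z) = trace (x \<mapsto> R(x,y)z), R(x,y) = [nabla_x,nabla_y] - nabla_[x,y]:
 rho_jk = d_l Gamma^l_jk - d_j Gamma^l_lk + Gamma^l_lm Gamma^m_jk - Gamma^l_jm Gamma^m_lk.\<close>
definition ricci :: "(real^'m::finite \<Rightarrow> 'm \<Rightarrow> 'm \<Rightarrow> real) \<Rightarrow> real^'m \<Rightarrow> 'm \<Rightarrow> 'm \<Rightarrow> real" where
  "ricci G p j k = (\<Sum>l\<in>UNIV. pd (\<lambda>q. christoffel G q l j k) l p - pd (\<lambda>q. christoffel G q l l k) j p
      + (\<Sum>m\<in>UNIV. christoffel G p l l m * christoffel G p m j k - christoffel G p l j m * christoffel G p m l k))"

definition cov_deriv_11 :: "(real^'m::finite \<Rightarrow> 'm \<Rightarrow> 'm \<Rightarrow> real) \<Rightarrow> (real^'m \<Rightarrow> 'm \<Rightarrow> 'm \<Rightarrow> real)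
    \<Rightarrow> real^'m \<Rightarrow> 'm \<Rightarrow> 'm \<Rightarrow> 'm \<Rightarrow> real" where
  "cov_deriv_11 G Phi p i k j = pd (\<lambda>q. Phi q k j) i p
      + (\<Sum>l\<in>UNIV. christoffel G p k i l * Phi p l j - christoffel G p l i j * Phi p k l)"

definition cov_deriv_02 :: "(real^'m::finite \<Rightarrow> 'm \<Rightarrow> 'm \<Rightarrow> real) \<Rightarrow> (real^'m \<Rightarrow> 'm \<Rightarrow> 'm \<Rightarrow> real)
    \<Rightarrow> real^'m \<Rightarrow> 'm \<Rightarrow> 'm \<Rightarrow> 'm \<Rightarrow> real" where
  "cov_deriv_02 G T p i j k = pd (\<lambda>q. T q j k) i p
      - (\<Sum>l\<in>UNIV. christoffel G p l i j * T p l k + christoffel G p l i k * T p j l)"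

definition lie_deriv_metric :: "(real^'m::finite \<Rightarrow> 'm \<Rightarrow> 'm \<Rightarrow> real) \<Rightarrow> (real^'m \<Rightarrow> 'm \<Rightarrow> real)
    \<Rightarrow> real^'m \<Rightarrow> 'm \<Rightarrow> 'm \<Rightarrow> real" where
  "lie_deriv_metric G V p i j = (\<Sum>k\<in>UNIV. V p k * pd (\<lambda>q. G q i j) k p
      + G p k j * pd (\<lambda>q. V q k) i p + G p i k * pd (\<lambda>q. V q k) j p)"

definition assoc_metric :: "(real^'m::finite \<Rightarrow> 'm \<Rightarrow> 'm \<Rightarrow> real) \<Rightarrow> (real^'m \<Rightarrow> 'm \<Rightarrow> 'm \<Rightarrow> real)
    \<Rightarrow> (real^'m \<Rightarrow> 'm \<Rightarrow> real) \<Rightarrow> real^'m \<Rightarrow> 'm \<Rightarrow> 'm \<Rightarrow> real" where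
  "assoc_metric G Phi Eta p i j = (\<Sum>k\<in>UNIV. G p i k * Phi p k j) + Eta p i * Eta p j"

definition almost_contact_B_metric :: "nat \<Rightarrow> (real^'m::finite) set \<Rightarrow> (real^'m \<Rightarrow> 'm \<Rightarrow> 'm \<Rightarrow> real)
    \<Rightarrow> (real^'m \<Rightarrow> 'm \<Rightarrow> real) \<Rightarrow> (real^'m \<Rightarrow> 'm \<Rightarrow> real) \<Rightarrow> (real^'m \<Rightarrow> 'm \<Rightarrow> 'm \<Rightarrow> real) \<Rightarrow> bool" where
  "almost_contact_B_metric n U Phi Xi Eta G \<longleftrightarrow>
     CARD('m) = 2 * n + 1 \<and> open U \<and>
     (\<forall>i j. smooth_chart U (\<lambda>p. Phi p i j) \<and> smooth_chart U (\<lambda>p. G p i j)) \<and>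
     (\<forall>i. smooth_chart U (\<lambda>p. Xi p i) \<and> smooth_chart U (\<lambda>p. Eta p i)) \<and>
     (\<forall>p\<in>U.
        (\<forall>i. (\<Sum>j\<in>UNIV. Phi p i j * Xi p j) = 0) \<and>
        (\<forall>i j. (\<Sum>k\<in>UNIV. Phi p i k * Phi p k j) = - kdelta i j + Eta p j * Xi p i) \<and>
        (\<forall>j. (\<Sum>i\<in>UNIV. Eta p i * Phi p i j) = 0) \<and>
        (\<Sum>i\<in>UNIV. Eta p i * Xi p i) = 1 \<and>
        (\<forall>i j. G p i j = G p j i) \<and>
        has_signature (G p) (n + 1) n \<and>
        (\<forall>i j. (\<Sum>a\<in>UNIV. \<Sum>b\<in>UNIV. G p a b * Phi p a i * Phi p b j) = - G p i j + Eta p i * Eta p j))"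

definition sasaki_like :: "(real^'m::finite) set \<Rightarrow> (real^'m \<Rightarrow> 'm \<Rightarrow> 'm \<Rightarrow> real)
    \<Rightarrow> (real^'m \<Rightarrow> 'm \<Rightarrow> real) \<Rightarrow> (real^'m \<Rightarrow> 'm \<Rightarrow> real) \<Rightarrow> (real^'m \<Rightarrow> 'm \<Rightarrow> 'm \<Rightarrow> real) \<Rightarrow> bool" where
  "sasaki_like U Phi Xi Eta G \<longleftrightarrow> (\<forall>p\<in>U. \<forall>i j k.
     cov_deriv_11 G Phi p i k j = - G p i j * Xi p k - Eta p j * kdelta k i + 2 * Eta p i * Eta p j * Xi p k)"

definition ricci_like_soliton :: "(real^'m::finite) set \<Rightarrow> (real^'m \<Rightarrow> 'm \<Rightarrow> 'm \<Rightarrow> real)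
    \<Rightarrow> (real^'m \<Rightarrow> 'm \<Rightarrow> 'm \<Rightarrow> real) \<Rightarrow> (real^'m \<Rightarrow> 'm \<Rightarrow> real) \<Rightarrow> (real^'m \<Rightarrow> 'm \<Rightarrow> real)
    \<Rightarrow> real \<Rightarrow> real \<Rightarrow> real \<Rightarrow> bool" where
  "ricci_like_soliton U G Phi Eta V lam mu nu \<longleftrightarrow> (\<forall>p\<in>U. \<forall>i j.
     (1/2) * lie_deriv_metric G V p i j + ricci G p i j + lam * G p i j
       + mu * assoc_metric G Phi Eta p i j + nu * Eta p i * Eta p j = 0)"

definition locally_ricci_symmetric :: "(real^'m::finite) set \<Rightarrow> (real^'m \<Rightarrow> 'm \<Rightarrow> 'm \<Rightarrow> real) \<Rightarrow> bool" where
  "locally_ricci_symmetric U G \<longleftrightarrow> (\<forall>p\<in>U. \<forall>i j k. cov_deriv_02 G (ricci G) p i j k = 0)"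

definition einstein :: "(real^'m::finite) set \<Rightarrow> (real^'m \<Rightarrow> 'm \<Rightarrow> 'm \<Rightarrow> real) \<Rightarrow> bool" where
  "einstein U G \<longleftrightarrow> (\<exists>c::real. \<forall>p\<in>U. \<forall>i j. ricci G p i j = c * G p i j)"

end

theory Submission
  imports Defs
begin


lemma line_has_deriv:
  fixes f :: "real^'m \<Rightarrow> real"
  assumes "f differentiable (at p)"
  shows "((\<lambda>t. f (p + t *\<^sub>R axis i 1)) has_real_derivative pd f i p) (at 0)"
proof -
  have "(\<lambda>t. f (p + t *\<^sub>R axis i 1)) differentiable (at 0)"
    by (rule differentiable_compose[where f=f]) (use assms in \<open>auto intro!: derivative_intros\<close>)
  then show ?thesis unfolding pd_def using DERIV_deriv_iff_real_differentiable by blast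
qed

lemma line_has_deriv_at:
  fixes f :: "real^'m \<Rightarrow> real"
  assumes "f differentiable (at (q + s *\<^sub>R axis i 1))"
  shows "((\<lambda>t. f (q + t *\<^sub>R axis i 1)) has_real_derivative pd f i (q + s *\<^sub>R axis i 1)) (at s)"
proof -
  have "((\<lambda>t. f ((q + s *\<^sub>R axis i 1) + t *\<^sub>R axis i 1)) has_real_derivative pd f i (q + s *\<^sub>R axis i 1)) (at (s - s + 0))"
    using line_has_deriv[OF assms] by simp
  then have "((\<lambda>t. f ((q + s *\<^sub>R axis i 1) + (t + - s) *\<^sub>R axis i 1)) has_real_derivative pd f i (q + s *\<^sub>R axis i 1)) (at s)"
    using DERIV_shift[where z="-s" and x=s and f="\<lambda>t. f ((q + s *\<^sub>R axis i 1) + t *\<^sub>R axis i 1)"] by simp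
  then show ?thesis by (simp add: algebra_simps)
qed

lemma pd_eqI: "((\<lambda>t. f (p + t *\<^sub>R axis i 1)) has_real_derivative D) (at 0) \<Longrightarrow> pd f i p = D"
  unfolding pd_def by (rule DERIV_imp_deriv)

definition Dp :: "(real^'m \<Rightarrow> real) \<Rightarrow> real^'m \<Rightarrow> bool" where
  "Dp f p \<longleftrightarrow> f differentiable (at p)"

lemma pd_add: "Dp f p \<Longrightarrow> Dp g p \<Longrightarrow> pd (\<lambda>q. f q + g q) i p = pd f i p + pd g i p"
  unfolding Dp_def
  by (intro pd_eqI) (auto intro!: derivative_eq_intros line_has_deriv)

lemma pd_diff: "Dp f p \<Longrightarrow> Dp g p \<Longrightarrow> pd (\<lambda>q. f q - g q) i p = pd f i p - pd g i p"
  unfolding Dp_def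
  by (intro pd_eqI) (auto intro!: derivative_eq_intros line_has_deriv)

lemma pd_minus: "Dp f p \<Longrightarrow> pd (\<lambda>q. - f q) i p = - pd f i p"
  unfolding Dp_def
  by (intro pd_eqI) (auto intro!: derivative_eq_intros line_has_deriv)

lemma pd_mult: "Dp f p \<Longrightarrow> Dp g p \<Longrightarrow> pd (\<lambda>q. f q * g q) i p = pd f i p * g p + f p * pd g i p"
  unfolding Dp_def
  by (intro pd_eqI) (auto intro!: derivative_eq_intros line_has_deriv)

lemma pd_const: "pd (\<lambda>q. c) i p = 0"
  unfolding pd_def by (rule DERIV_imp_deriv) (auto intro!: derivative_eq_intros)

lemma pd_cmult: "Dp f p \<Longrightarrow> pd (\<lambda>q. c * f q) i p = c * pd f i p"
  by (simp add: pd_mult pd_const Dp_def)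

lemma has_real_derivative_sum:
  "finite S \<Longrightarrow> (\<And>a. a \<in> S \<Longrightarrow> (f a has_real_derivative f' a) (at x)) \<Longrightarrow>
   ((\<lambda>t. \<Sum>a\<in>S. f a t) has_real_derivative (\<Sum>a\<in>S. f' a)) (at x)"
  by (induction S rule: finite_induct) (auto intro!: derivative_eq_intros)

lemma pd_sum: "finite S \<Longrightarrow> (\<And>a. a \<in> S \<Longrightarrow> Dp (f a) p) \<Longrightarrow> pd (\<lambda>q. \<Sum>a\<in>S. f a q) i p = (\<Sum>a\<in>S. pd (f a) i p)"
  unfolding Dp_def
  by (intro pd_eqI) (auto intro!: has_real_derivative_sum line_has_deriv)

lemma Dp_add[intro]: "Dp f p \<Longrightarrow> Dp g p \<Longrightarrow> Dp (\<lambda>q. f q + g q) p" unfolding Dp_def by auto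
lemma Dp_diff[intro]: "Dp f p \<Longrightarrow> Dp g p \<Longrightarrow> Dp (\<lambda>q. f q - g q) p" unfolding Dp_def by auto
lemma Dp_minus[intro]: "Dp f p \<Longrightarrow> Dp (\<lambda>q. - f q) p" unfolding Dp_def by auto
lemma Dp_mult[intro]: "Dp f p \<Longrightarrow> Dp g p \<Longrightarrow> Dp (\<lambda>q. f q * g q) p" unfolding Dp_def by auto
lemma Dp_const[intro]: "Dp (\<lambda>q. c) p" unfolding Dp_def by auto
lemma Dp_divide[intro]: "Dp f p \<Longrightarrow> Dp g p \<Longrightarrow> g p \<noteq> 0 \<Longrightarrow> Dp (\<lambda>q. f q / g q) p" unfolding Dp_def by auto
lemma Dp_sum[intro]: "finite S \<Longrightarrow> (\<And>a. a \<in> S \<Longrightarrow> Dp (f a) p) \<Longrightarrow> Dp (\<lambda>q. \<Sum>a\<in>S. f a q) p"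
  unfolding Dp_def by (auto intro!: differentiable_sum)
lemma Dp_prod[intro]: "finite S \<Longrightarrow> (\<And>a. a \<in> S \<Longrightarrow> Dp (f a) p) \<Longrightarrow> Dp (\<lambda>q. \<Prod>a\<in>S. f a q) p"
  by (induction S rule: finite_induct) auto

lemma pd_local:
  assumes "open U" "p \<in> U" "\<And>q. q \<in> U \<Longrightarrow> f q = g q"
  shows "pd f i p = pd g i p"
  unfolding pd_def
proof (rule deriv_cong_ev[OF _ refl])
  have "open ((\<lambda>t::real. p + t *\<^sub>R axis i 1) -` U)"
    by (rule continuous_open_vimage[OF assms(1)]) (auto intro!: continuous_intros)
  moreover have "0 \<in> (\<lambda>t::real. p + t *\<^sub>R axis i 1) -` U" using assms(2) by simp
  ultimately have "\<forall>\<^sub>F t in nhds 0. t \<in> (\<lambda>t::real. p + t *\<^sub>R axis i 1) -` U"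
    by (rule eventually_nhds_in_open)
  then show "\<forall>\<^sub>F t in nhds 0. f (p + t *\<^sub>R axis i 1) = g (p + t *\<^sub>R axis i 1)"
    by eventually_elim (use assms(3) in auto)
qed




lemma norm_two_axes:
  assumes "0 \<le> s" "s \<le> h" "0 \<le> t" "t \<le> h"
  shows "norm (s *\<^sub>R axis i (1::real) + t *\<^sub>R axis j 1 :: real^'m) \<le> 2 * h"
proof -
  have "norm (s *\<^sub>R axis i (1::real) + t *\<^sub>R axis j 1 :: real^'m) \<le> norm (s *\<^sub>R axis i (1::real) :: real^'m) + norm (t *\<^sub>R axis j (1::real) :: real^'m)"
    by (rule norm_triangle_ineq)
  also have "\<dots> = s + t" using assms by simp
  finally show ?thesis using assms by simp
qed

lemma mvt2d:
  fixes f :: "real^'m \<Rightarrow> real"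
  assumes h: "0 < h" and sub: "cball p (2*h) \<subseteq> U"
    and df: "\<forall>q\<in>U. Dp f q" and dfi: "\<forall>q\<in>U. Dp (pd f i) q"
  shows "\<exists>x. dist x p \<le> 2*h \<and>
     f (p + h *\<^sub>R axis j 1 + h *\<^sub>R axis i 1) - f (p + h *\<^sub>R axis i 1) - f (p + h *\<^sub>R axis j 1) + f p
       = h * h * pd (pd f i) j x"
proof -
  let ?ei = "axis i (1::real) :: real^'m" and ?ej = "axis j (1::real) :: real^'m"
  have inU: "p + s *\<^sub>R ?ei + t *\<^sub>R ?ej \<in> U" if "0 \<le> s" "s \<le> h" "0 \<le> t" "t \<le> h" for s t
  proof -
    have "dist (p + s *\<^sub>R ?ei + t *\<^sub>R ?ej) p \<le> 2*h"
      using norm_two_axes[OF that, of i j] by (simp add: dist_norm add.assoc)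
    then have "p + s *\<^sub>R ?ei + t *\<^sub>R ?ej \<in> cball p (2*h)" by (simp add: dist_commute)
    then show ?thesis using sub by blast
  qed
  define \<phi> where "\<phi> s = f ((p + h *\<^sub>R ?ej) + s *\<^sub>R ?ei) - f (p + s *\<^sub>R ?ei)" for s
  have dphi: "DERIV \<phi> s :> pd f i ((p + h *\<^sub>R ?ej) + s *\<^sub>R ?ei) - pd f i (p + s *\<^sub>R ?ei)"
    if "0 \<le> s" "s \<le> h" for s
  proof -
    have a: "(p + h *\<^sub>R ?ej) + s *\<^sub>R ?ei \<in> U" using inU[of s h] that h by (simp add: algebra_simps)
    have b: "p + s *\<^sub>R ?ei \<in> U" using inU[of s 0] that h by simp
    show ?thesis unfolding \<phi>_def
      by (rule DERIV_diff; rule line_has_deriv_at) (use a b df in \<open>simp_all add: Dp_def\<close>)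
  qed
  obtain s1 where s1: "0 < s1" "s1 < h"
    "\<phi> h - \<phi> 0 = (h - 0) * (pd f i ((p + h *\<^sub>R ?ej) + s1 *\<^sub>R ?ei) - pd f i (p + s1 *\<^sub>R ?ei))"
    using MVT2[OF h, of \<phi> "\<lambda>s. pd f i ((p + h *\<^sub>R ?ej) + s *\<^sub>R ?ei) - pd f i (p + s *\<^sub>R ?ei)", OF dphi] by blast
  define \<psi> where "\<psi> t = pd f i ((p + s1 *\<^sub>R ?ei) + t *\<^sub>R ?ej)" for t
  have dpsi: "DERIV \<psi> t :> pd (pd f i) j ((p + s1 *\<^sub>R ?ei) + t *\<^sub>R ?ej)" if "0 \<le> t" "t \<le> h" for t
  proof -
    have a: "(p + s1 *\<^sub>R ?ei) + t *\<^sub>R ?ej \<in> U" using inU[of s1 t] that s1 by simp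
    show ?thesis unfolding \<psi>_def
      by (rule line_has_deriv_at) (use a dfi in \<open>simp add: Dp_def\<close>)
  qed
  obtain t1 where t1: "0 < t1" "t1 < h"
    "\<psi> h - \<psi> 0 = (h - 0) * pd (pd f i) j ((p + s1 *\<^sub>R ?ei) + t1 *\<^sub>R ?ej)"
    using MVT2[OF h, of \<psi> "\<lambda>t. pd (pd f i) j ((p + s1 *\<^sub>R ?ei) + t *\<^sub>R ?ej)", OF dpsi] by blast
  have "dist ((p + s1 *\<^sub>R ?ei) + t1 *\<^sub>R ?ej) p \<le> 2*h"
    using norm_two_axes[of s1 h t1 i j] s1 t1 by (simp add: dist_norm add.assoc)
  moreover have "f (p + h *\<^sub>R ?ej + h *\<^sub>R ?ei) - f (p + h *\<^sub>R ?ei) - f (p + h *\<^sub>R ?ej) + f p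
      = h * h * pd (pd f i) j ((p + s1 *\<^sub>R ?ei) + t1 *\<^sub>R ?ej)"
  proof -
    have "f (p + h *\<^sub>R ?ej + h *\<^sub>R ?ei) - f (p + h *\<^sub>R ?ei) - f (p + h *\<^sub>R ?ej) + f p = \<phi> h - \<phi> 0"
      by (simp add: \<phi>_def)
    also have "\<dots> = h * (\<psi> h - \<psi> 0)" using s1(3) by (simp add: \<psi>_def algebra_simps)
    also have "\<dots> = h * h * pd (pd f i) j ((p + s1 *\<^sub>R ?ei) + t1 *\<^sub>R ?ej)" using t1(3) by simp
    finally show ?thesis .
  qed
  ultimately show ?thesis by blast
qed

lemma clairaut:
  fixes f :: "real^'m \<Rightarrow> real"
  assumes U: "open U" "p \<in> U"
    and df: "\<forall>q\<in>U. Dp f q" and dfi: "\<forall>k. \<forall>q\<in>U. Dp (pd f k) q"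
    and ci: "continuous_on U (pd (pd f i) j)" and cj: "continuous_on U (pd (pd f j) i)"
  shows "pd (pd f i) j p = pd (pd f j) i p"
proof (rule ccontr)
  let ?A = "pd (pd f i) j" and ?B = "pd (pd f j) i"
  assume ne: "?A p \<noteq> ?B p"
  define d where "d = \<bar>?A p - ?B p\<bar> / 2"
  have d: "d > 0" using ne by (simp add: d_def)
  obtain r where r: "r > 0" "cball p r \<subseteq> U" using U open_contains_cball by blast
  have "\<forall>x\<in>U. isCont ?A x" using ci continuous_on_eq_continuous_at[OF U(1)] by blast
  then have cA: "isCont ?A p" using U(2) by blast
  have "\<forall>x\<in>U. isCont ?B x" using cj continuous_on_eq_continuous_at[OF U(1)] by blast
  then have cB: "isCont ?B p" using U(2) by blast
  obtain dA where dA: "dA > 0" "\<forall>x. dist x p < dA \<longrightarrow> dist (?A x) (?A p) < d"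
    using cA d unfolding continuous_at_eps_delta by blast
  obtain dB where dB: "dB > 0" "\<forall>x. dist x p < dB \<longrightarrow> dist (?B x) (?B p) < d"
    using cB d unfolding continuous_at_eps_delta by blast
  define h where "h = min r (min dA dB) / 4"
  have h: "h > 0" using r dA dB by (simp add: h_def)
  have sub: "cball p (2*h) \<subseteq> U" proof -
    have "2*h \<le> r" using r dA dB by (simp add: h_def)
    then show ?thesis using r(2) subset_cball by blast
  qed
  obtain x1 where x1: "dist x1 p \<le> 2*h"
    "f (p + h *\<^sub>R axis j 1 + h *\<^sub>R axis i 1) - f (p + h *\<^sub>R axis i 1) - f (p + h *\<^sub>R axis j 1) + f p
       = h * h * ?A x1"
    using mvt2d[OF h sub df, where i=i and j=j] dfi by blast
  obtain x2 where x2: "dist x2 p \<le> 2*h"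
    "f (p + h *\<^sub>R axis i 1 + h *\<^sub>R axis j 1) - f (p + h *\<^sub>R axis j 1) - f (p + h *\<^sub>R axis i 1) + f p
       = h * h * ?B x2"
    using mvt2d[OF h sub df, where i=j and j=i] dfi by blast
  have pteq: "p + h *\<^sub>R axis i 1 + h *\<^sub>R axis j 1 = p + h *\<^sub>R axis j 1 + h *\<^sub>R axis i 1"
    by (simp add: add_ac)
  have "h * h * ?A x1 = h * h * ?B x2" using x1(2) x2(2) unfolding pteq by linarith
  then have eq: "?A x1 = ?B x2" using h by simp
  have "dist x1 p < dA" "dist x2 p < dB" proof -
    have "2*h < dA" "2*h < dB" using r dA dB by (auto simp: h_def)
    then show "dist x1 p < dA" "dist x2 p < dB" using x1(1) x2(1) by auto
  qed
  then have "\<bar>?A x1 - ?A p\<bar> < d" "\<bar>?B x2 - ?B p\<bar> < d" using dA dB by (auto simp: dist_real_def)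
  then have "\<bar>?A p - ?B p\<bar> < 2 * d" using eq by linarith
  then show False by (simp add: d_def)
qed




lemma Dp_local:
  assumes "open U" "p \<in> U" "\<And>q. q \<in> U \<Longrightarrow> f q = g q" "Dp f p"
  shows "Dp g p"
proof -
  obtain f' where "(f has_derivative f') (at p)" using assms(4) unfolding Dp_def differentiable_def by blast
  then have "(g has_derivative f') (at p)"
    by (rule has_derivative_transform_within_open[OF _ assms(1,2)]) (simp add: assms(3))
  then show ?thesis unfolding Dp_def differentiable_def by blast
qed

lemma det_Dp:
  fixes A :: "real^'m \<Rightarrow> real^'n::finite^'n"
  assumes "\<And>i j. Dp (\<lambda>q. A q $ i $ j) p"
  shows "Dp (\<lambda>q. det (A q)) p"
  unfolding det_def
  by (intro Dp_sum Dp_mult Dp_prod Dp_const assms) (simp_all add: finite_permutations)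

lemma signature_det:
  assumes "has_signature A a b"
  shows "det (\<chi> i j. A i j) \<noteq> 0"
proof -
  define P where "P = (\<lambda>e :: 'a \<Rightarrow> real^'a. (\<forall>i j. i \<noteq> j \<longrightarrow> bil A (e i) (e j) = 0) \<and>
      (\<forall>i. bil A (e i) (e i) = 1 \<or> bil A (e i) (e i) = -1) \<and>
      card {i. bil A (e i) (e i) = 1} = a \<and> card {i. bil A (e i) (e i) = -1} = b)"
  have ex: "\<exists>e. P e" using assms unfolding has_signature_def P_def .
  define e where "e = (SOME e. P e)"
  have Pe: "P e" unfolding e_def using ex by (rule someI_ex)
  have e1: "\<forall>i j. i \<noteq> j \<longrightarrow> bil A (e i) (e j) = 0" and e2: "\<forall>i. bil A (e i) (e i) = 1 \<or> bil A (e i) (e i) = -1"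
    using Pe unfolding P_def by simp_all
  define E :: "real^'a^'a" where "E = (\<chi> x y. e y $ x)"
  define M :: "real^'a^'a" where "M = (\<chi> i j. A i j)"
  have entry: "(transpose E ** M ** E) $ x $ y = bil A (e x) (e y)" for x y
  proof -
    have "(transpose E ** M ** E) $ x $ y = (\<Sum>b\<in>UNIV. \<Sum>a\<in>UNIV. e x $ a * A a b * e y $ b)"
      by (simp add: E_def M_def matrix_matrix_mult_def transpose_def sum_distrib_right)
    also have "\<dots> = bil A (e x) (e y)" unfolding bil_def by (rule sum.swap)
    finally show ?thesis .
  qed
  have d1: "det (transpose E ** M ** E) = (\<Prod>i\<in>UNIV. bil A (e i) (e i))"
    by (subst det_diagonal) (use e1 in \<open>simp_all add: entry\<close>)
  have d2: "(\<Prod>i\<in>UNIV. bil A (e i) (e i)) \<noteq> 0"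
  proof -
    have "bil A (e i) (e i) \<noteq> 0" for i using e2 by (metis zero_neq_one zero_neq_neg_one)
    then show ?thesis by simp
  qed
  have d3: "det (transpose E ** M ** E) = det (transpose E) * det M * det E" by (simp only: det_mul)
  have "det (transpose E) * det M * det E \<noteq> 0" using d1 d2 d3 by simp
  then show ?thesis by (simp add: M_def)
qed

lemma matrix_inv_right:
  fixes A :: "real^'n^'n"
  assumes "det A \<noteq> 0"
  shows "A ** matrix_inv A = mat 1"
proof -
  have "invertible A" using assms invertible_det_nz by blast
  then obtain A' where A': "A ** A' = mat 1 \<and> A' ** A = mat 1" unfolding invertible_def by blast
  have "A ** matrix_inv A = mat 1 \<and> matrix_inv A ** A = mat 1"
    unfolding matrix_inv_def by (rule someI[where P="\<lambda>B. A ** B = mat 1 \<and> B ** A = mat 1", OF A'])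
  then show ?thesis by blast
qed

lemma matrix_inv_cramer:
  fixes A :: "real^'n^'n"
  assumes "det A \<noteq> 0"
  shows "matrix_inv A $ k $ l = det (\<chi> i j. if j = k then axis l 1 $ i else A $ i $ j) / det A"
proof -
  have "A *v (matrix_inv A *v axis l 1) = axis l 1"
    by (simp add: matrix_vector_mul_assoc matrix_inv_right[OF assms])
  then have "matrix_inv A *v axis l 1 = (\<chi> k. det (\<chi> i j. if j = k then axis l 1 $ i else A $ i $ j) / det A)"
    by (rule iffD1[OF cramer[OF assms]])
  then have "(matrix_inv A *v axis l 1) $ k = det (\<chi> i j. if j = k then axis l 1 $ i else A $ i $ j) / det A"
    by simp
  then show ?thesis by (simp add: matrix_vector_mult_basis column_def)
qed

lemma metric_inv_Dp:
  fixes G :: "real^'m \<Rightarrow> 'm \<Rightarrow> 'm \<Rightarrow> real"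
  assumes U: "open U" "p \<in> U" and nz: "\<forall>q\<in>U. det (\<chi> i j. G q i j) \<noteq> 0"
    and dG: "\<And>i j. Dp (\<lambda>q. G q i j) p"
  shows "Dp (\<lambda>q. metric_inv G q k l) p"
proof -
  have eq: "metric_inv G q k l = det (\<chi> i j. if j = k then axis l 1 $ i else G q i j) / det (\<chi> i j. G q i j)"
    if "q \<in> U" for q
  proof -
    have m: "(\<chi> i j. if j = k then axis l 1 $ i else (\<chi> i j. G q i j) $ i $ j) = (\<chi> i j. if j = k then axis l 1 $ i else G q i j)"
      by (simp add: vec_eq_iff)
    show ?thesis
      unfolding metric_inv_def matrix_inv_cramer[OF nz[rule_format, OF that]] m ..
  qed
  have D1: "Dp (\<lambda>q. (\<chi> i j. if j = k then axis l 1 $ i else G q i j) $ i $ j) p" for i j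
    by (cases "j = k") (simp_all add: dG Dp_const)
  have D2: "Dp (\<lambda>q. (\<chi> i j. G q i j) $ i $ j) p" for i j
    by (simp add: dG)
  have D: "Dp (\<lambda>q. det (\<chi> i j. if j = k then axis l 1 $ i else G q i j) / det (\<chi> i j. G q i j)) p"
    by (rule Dp_divide[OF det_Dp[OF D1] det_Dp[OF D2]]) (use nz U in blast)
  show ?thesis
    by (rule Dp_local[OF U _ D]) (simp add: eq)
qed



lemma sum_swap3: "(\<Sum>j\<in>A. \<Sum>a\<in>B. \<Sum>b\<in>C. f j a b) = (\<Sum>a\<in>B. \<Sum>b\<in>C. \<Sum>j\<in>A. f j a b)"
  by (subst sum.swap) (rule sum.cong[OF refl], rule sum.swap)

lemma sum_kd1: fixes m :: "'a::finite" shows "(\<Sum>l\<in>UNIV. kdelta m l * f l) = f m"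
proof -
  have "kdelta m l * f l = (if m = l then f m else 0)" for l by (simp add: kdelta_def)
  then show ?thesis by simp
qed

lemma sum_kd2: fixes m :: "'a::finite" shows "(\<Sum>l\<in>UNIV. kdelta l m * f l) = f m"
proof -
  have "kdelta l m * f l = (if m = l then f m else 0)" for l by (auto simp add: kdelta_def)
  then show ?thesis by simp
qed

locale sas =
  fixes U :: "(real^'m::finite) set"
    and G Phi :: "real^'m \<Rightarrow> 'm \<Rightarrow> 'm \<Rightarrow> real"
    and Xi Eta :: "real^'m \<Rightarrow> 'm \<Rightarrow> real"
    and n :: nat
  assumes n1: "n \<ge> 1"
    and acbm: "almost_contact_B_metric n U Phi Xi Eta G"
    and sl: "sasaki_like U Phi Xi Eta G"
begin

lemma openU: "open U" and card: "CARD('m) = 2 * n + 1"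
  using acbm unfolding almost_contact_B_metric_def by auto

lemma smooth: "smooth_chart U (\<lambda>p. Phi p i j)" "smooth_chart U (\<lambda>p. G p i j)"
   "smooth_chart U (\<lambda>p. Xi p i)" "smooth_chart U (\<lambda>p. Eta p i)"
  using acbm unfolding almost_contact_B_metric_def by auto

lemma C1_Dp: "smooth_chart U f \<Longrightarrow> q \<in> U \<Longrightarrow> Dp f q"
proof -
  assume "smooth_chart U f" "q \<in> U"
  then have "Ck 1 U f" unfolding smooth_chart_def by blast
  then have "f differentiable_on U" by simp
  then show "Dp f q" using \<open>q \<in> U\<close> openU differentiable_on_eq_differentiable_at unfolding Dp_def by blast
qed

lemma C2_Dp: "smooth_chart U f \<Longrightarrow> q \<in> U \<Longrightarrow> Dp (pd f i) q"
proof -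
  assume "smooth_chart U f" "q \<in> U"
  then have "Ck 2 U f" unfolding smooth_chart_def by blast
  then have "pd f i differentiable_on U" by (simp add: numeral_2_eq_2)
  then show "Dp (pd f i) q" using \<open>q \<in> U\<close> openU differentiable_on_eq_differentiable_at unfolding Dp_def by blast
qed

lemma C2_cont: "smooth_chart U f \<Longrightarrow> continuous_on U (pd (pd f i) j)"
proof -
  assume "smooth_chart U f"
  then have "Ck 2 U f" unfolding smooth_chart_def by blast
  then show ?thesis by (simp add: numeral_2_eq_2)
qed

lemma DG: "q \<in> U \<Longrightarrow> Dp (\<lambda>p. G p i j) q" using C1_Dp smooth by blast
lemma DPhi: "q \<in> U \<Longrightarrow> Dp (\<lambda>p. Phi p i j) q" using C1_Dp smooth by blast
lemma DXi: "q \<in> U \<Longrightarrow> Dp (\<lambda>p. Xi p i) q" using C1_Dp smooth by blast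
lemma DEta: "q \<in> U \<Longrightarrow> Dp (\<lambda>p. Eta p i) q" using C1_Dp smooth by blast
lemma DdG: "q \<in> U \<Longrightarrow> Dp (pd (\<lambda>p. G p i j) k) q" using C2_Dp smooth by blast
lemma DdXi: "q \<in> U \<Longrightarrow> Dp (pd (\<lambda>p. Xi p i) k) q" using C2_Dp smooth by blast

lemma phixi: "p \<in> U \<Longrightarrow> (\<Sum>j\<in>UNIV. Phi p i j * Xi p j) = 0"
  and phi2: "p \<in> U \<Longrightarrow> (\<Sum>k\<in>UNIV. Phi p i k * Phi p k j) = - kdelta i j + Eta p j * Xi p i"
  and etaphi: "p \<in> U \<Longrightarrow> (\<Sum>i\<in>UNIV. Eta p i * Phi p i j) = 0"
  and etaxi: "p \<in> U \<Longrightarrow> (\<Sum>i\<in>UNIV. Eta p i * Xi p i) = 1"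
  and Gsym: "p \<in> U \<Longrightarrow> G p i j = G p j i"
  and sig: "p \<in> U \<Longrightarrow> has_signature (G p) (n + 1) n"
  and compat: "p \<in> U \<Longrightarrow> (\<Sum>a\<in>UNIV. \<Sum>b\<in>UNIV. G p a b * Phi p a i * Phi p b j) = - G p i j + Eta p i * Eta p j"
  using acbm unfolding almost_contact_B_metric_def by auto

lemma sasaki: "p \<in> U \<Longrightarrow> cov_deriv_11 G Phi p i k j = - G p i j * Xi p k - Eta p j * kdelta k i + 2 * Eta p i * Eta p j * Xi p k"
  using sl unfolding sasaki_like_def by auto

lemma gxi: assumes "p \<in> U" shows "(\<Sum>j\<in>UNIV. G p i j * Xi p j) = Eta p i"
proof -
  have "(\<Sum>j\<in>UNIV. (\<Sum>a\<in>UNIV. \<Sum>b\<in>UNIV. G p a b * Phi p a i * Phi p b j) * Xi p j)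
      = (\<Sum>a\<in>UNIV. \<Sum>b\<in>UNIV. G p a b * Phi p a i * (\<Sum>j\<in>UNIV. Phi p b j * Xi p j))"
    unfolding sum_distrib_right sum_distrib_left
    by (subst sum_swap3) (simp add: mult_ac)
  also have "\<dots> = 0" using phixi[OF assms] by simp
  finally have "(\<Sum>j\<in>UNIV. (- G p i j + Eta p i * Eta p j) * Xi p j) = 0"
    using compat[OF assms] by simp
  moreover have "(\<Sum>j\<in>UNIV. (- G p i j + Eta p i * Eta p j) * Xi p j) = - (\<Sum>j\<in>UNIV. G p i j * Xi p j) + Eta p i * (\<Sum>j\<in>UNIV. Eta p j * Xi p j)"
    by (simp add: ring_distribs sum.distrib sum_subtractf sum_distrib_left sum_negf mult.assoc)
  ultimately have "- (\<Sum>j\<in>UNIV. G p i j * Xi p j) + Eta p i * (\<Sum>j\<in>UNIV. Eta p j * Xi p j) = 0"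
    by simp
  then show ?thesis using etaxi[OF assms] by simp
qed


abbreviation "Chr \<equiv> christoffel G"

lemma detG: "p \<in> U \<Longrightarrow> det (\<chi> i j. G p i j) \<noteq> 0"
  using signature_det sig by blast

lemma ginv_right: assumes "p \<in> U" shows "(\<Sum>l\<in>UNIV. G p i l * metric_inv G p l k) = kdelta i k"
proof -
  have "((\<chi> i j. G p i j) ** matrix_inv (\<chi> i j. G p i j)) $ i $ k = mat 1 $ i $ k"
    using matrix_inv_right[OF detG[OF assms]] by simp
  then show ?thesis unfolding matrix_matrix_mult_def mat_def metric_inv_def kdelta_def by simp
qed

lemma dGsym: "p \<in> U \<Longrightarrow> pd (\<lambda>q. G q i j) k p = pd (\<lambda>q. G q j i) k p"
  by (rule pd_local[OF openU]) (auto intro: Gsym)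

lemma chr_sym: "p \<in> U \<Longrightarrow> Chr p k i j = Chr p k j i"
  unfolding christoffel_def using dGsym[of p i j] by (simp add: algebra_simps)

lemma chr1: assumes "p \<in> U"
  shows "(\<Sum>k\<in>UNIV. G p m k * Chr p k i j) = (1/2) * (pd (\<lambda>q. G q m j) i p + pd (\<lambda>q. G q m i) j p - pd (\<lambda>q. G q i j) m p)"
proof -
  define X where "X l = pd (\<lambda>q. G q l j) i p + pd (\<lambda>q. G q l i) j p - pd (\<lambda>q. G q i j) l p" for l
  have "(\<Sum>k\<in>UNIV. G p m k * Chr p k i j) = (1/2) * (\<Sum>k\<in>UNIV. \<Sum>l\<in>UNIV. G p m k * metric_inv G p k l * X l)"
    unfolding christoffel_def X_def by (simp add: sum_distrib_left mult_ac)
  also have "\<dots> = (1/2) * (\<Sum>l\<in>UNIV. (\<Sum>k\<in>UNIV. G p m k * metric_inv G p k l) * X l)"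
    by (subst sum.swap) (simp add: sum_distrib_right)
  also have "\<dots> = (1/2) * X m"
    by (simp add: ginv_right[OF assms] sum_kd1)
  finally show ?thesis by (simp add: X_def)
qed

lemma metric_compat: assumes "p \<in> U"
  shows "pd (\<lambda>q. G q i j) k p = (\<Sum>l\<in>UNIV. Chr p l k i * G p l j + Chr p l k j * G p i l)"
proof -
  have a: "(\<Sum>l\<in>UNIV. Chr p l k i * G p l j) = (\<Sum>l\<in>UNIV. G p j l * Chr p l k i)"
    using Gsym[OF assms] by (simp add: mult.commute)
  have b: "(\<Sum>l\<in>UNIV. Chr p l k j * G p i l) = (\<Sum>l\<in>UNIV. G p i l * Chr p l k j)"
    by (simp add: mult.commute)
  show ?thesis
    unfolding sum.distrib a b chr1[OF assms]
    using dGsym[OF assms, of j i k] dGsym[OF assms, of j k i] dGsym[OF assms, of i k j]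
    by (simp add: algebra_simps)
qed

lemma DChr: assumes "p \<in> U" shows "Dp (\<lambda>q. Chr q k i j) p"
proof -
  have "Dp (\<lambda>q. metric_inv G q k l) p" for l
    by (rule metric_inv_Dp[OF openU assms]) (auto simp: detG DG assms)
  then show ?thesis unfolding christoffel_def
    by (intro Dp_mult Dp_const Dp_sum Dp_add Dp_diff DdG assms) simp_all
qed

end



context sas begin

lemma gxi2: assumes "p \<in> U" shows "(\<Sum>k\<in>UNIV. G p k m * Xi p k) = Eta p m"
proof -
  have "(\<Sum>k\<in>UNIV. G p k m * Xi p k) = (\<Sum>k\<in>UNIV. G p m k * Xi p k)"
    by (rule sum.cong[OF refl]) (metis Gsym assms)
  then show ?thesis using gxi[OF assms] by simp
qed

lemma pd_zero_on:
  assumes "p \<in> U" "\<And>q. q \<in> U \<Longrightarrow> f q = c"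
  shows "pd f i p = 0"
proof -
  have "pd f i p = pd (\<lambda>q. c) i p" by (rule pd_local[OF openU assms(1)]) (simp add: assms(2))
  then show ?thesis by (simp add: pd_const)
qed

lemma step1: assumes "p \<in> U"
  shows "(\<Sum>j\<in>UNIV. pd (\<lambda>q. Phi q k j) i p * Xi p j + Phi p k j * pd (\<lambda>q. Xi q j) i p) = 0"
proof -
  have "pd (\<lambda>q. \<Sum>j\<in>UNIV. Phi q k j * Xi q j) i p = 0"
    by (rule pd_zero_on[OF assms]) (simp add: phixi)
  moreover have "pd (\<lambda>q. \<Sum>j\<in>UNIV. Phi q k j * Xi q j) i p = (\<Sum>j\<in>UNIV. pd (\<lambda>q. Phi q k j) i p * Xi p j + Phi p k j * pd (\<lambda>q. Xi q j) i p)"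
    by (simp add: pd_sum pd_mult Dp_mult DPhi DXi assms)
  ultimately show ?thesis by simp
qed

lemma sas_xi: assumes "p \<in> U"
  shows "(\<Sum>j\<in>UNIV. cov_deriv_11 G Phi p i k j * Xi p j) = Eta p i * Xi p k - kdelta k i"
proof -
  have "(\<Sum>j\<in>UNIV. cov_deriv_11 G Phi p i k j * Xi p j)
     = (\<Sum>j\<in>UNIV. (- G p i j * Xi p k - Eta p j * kdelta k i + 2 * Eta p i * Eta p j * Xi p k) * Xi p j)"
    by (simp add: sasaki assms)
  also have "\<dots> = - Xi p k * (\<Sum>j\<in>UNIV. G p i j * Xi p j) - kdelta k i * (\<Sum>j\<in>UNIV. Eta p j * Xi p j)
        + 2 * Eta p i * Xi p k * (\<Sum>j\<in>UNIV. Eta p j * Xi p j)"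
    by (simp add: algebra_simps sum.distrib sum_subtractf sum_distrib_left sum_negf)
  also have "\<dots> = Eta p i * Xi p k - kdelta k i"
    by (simp add: gxi etaxi assms)
  finally show ?thesis .
qed

definition "Dxi p i k = pd (\<lambda>q. Xi q k) i p + (\<Sum>l\<in>UNIV. Chr p k i l * Xi p l)"

lemma step3: assumes "p \<in> U"
  shows "(\<Sum>l\<in>UNIV. Phi p k l * Dxi p i l) = kdelta k i - Eta p i * Xi p k"
proof -
  have t2: "(\<Sum>j\<in>UNIV. \<Sum>l\<in>UNIV. Chr p k i l * Phi p l j * Xi p j) = 0"
  proof -
    have "(\<Sum>j\<in>UNIV. \<Sum>l\<in>UNIV. Chr p k i l * Phi p l j * Xi p j) = (\<Sum>l\<in>UNIV. \<Sum>j\<in>UNIV. Chr p k i l * Phi p l j * Xi p j)"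
      by (rule sum.swap)
    also have "\<dots> = (\<Sum>l\<in>UNIV. Chr p k i l * (\<Sum>j\<in>UNIV. Phi p l j * Xi p j))"
      by (simp add: sum_distrib_left mult.assoc)
    finally show ?thesis by (simp add: phixi assms)
  qed
  have t3: "(\<Sum>j\<in>UNIV. \<Sum>l\<in>UNIV. Chr p l i j * Phi p k l * Xi p j) = (\<Sum>l\<in>UNIV. Phi p k l * (\<Sum>j\<in>UNIV. Chr p l i j * Xi p j))"
  proof -
    have "(\<Sum>j\<in>UNIV. \<Sum>l\<in>UNIV. Chr p l i j * Phi p k l * Xi p j) = (\<Sum>l\<in>UNIV. \<Sum>j\<in>UNIV. Chr p l i j * Phi p k l * Xi p j)"
      by (rule sum.swap)
    also have "\<dots> = (\<Sum>l\<in>UNIV. Phi p k l * (\<Sum>j\<in>UNIV. Chr p l i j * Xi p j))"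
      by (simp add: sum_distrib_left mult_ac)
    finally show ?thesis .
  qed
  have "(\<Sum>j\<in>UNIV. cov_deriv_11 G Phi p i k j * Xi p j)
     = (\<Sum>j\<in>UNIV. pd (\<lambda>q. Phi q k j) i p * Xi p j) + (\<Sum>j\<in>UNIV. \<Sum>l\<in>UNIV. Chr p k i l * Phi p l j * Xi p j)
       - (\<Sum>j\<in>UNIV. \<Sum>l\<in>UNIV. Chr p l i j * Phi p k l * Xi p j)"
    unfolding cov_deriv_11_def by (simp add: algebra_simps sum.distrib sum_subtractf sum_distrib_right sum_distrib_left)
  also have "\<dots> = - (\<Sum>j\<in>UNIV. Phi p k j * pd (\<lambda>q. Xi q j) i p) - (\<Sum>l\<in>UNIV. Phi p k l * (\<Sum>j\<in>UNIV. Chr p l i j * Xi p j))"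
    using step1[OF assms, of k i] t2 t3 by (simp add: sum.distrib eq_neg_iff_add_eq_0)
  also have "\<dots> = - (\<Sum>l\<in>UNIV. Phi p k l * Dxi p i l)"
    unfolding Dxi_def by (simp add: algebra_simps sum.distrib)
  finally show ?thesis using sas_xi[OF assms, of i k] by simp
qed


lemma step4: assumes "p \<in> U"
  shows "Dxi p i m = - Phi p m i + Xi p m * (\<Sum>l\<in>UNIV. Eta p l * Dxi p i l)"
proof -
  have "(\<Sum>k\<in>UNIV. Phi p m k * (\<Sum>l\<in>UNIV. Phi p k l * Dxi p i l)) = (\<Sum>k\<in>UNIV. Phi p m k * (kdelta k i - Eta p i * Xi p k))"
    by (simp add: step3 assms)
  also have "\<dots> = (\<Sum>k\<in>UNIV. kdelta k i * Phi p m k) - Eta p i * (\<Sum>k\<in>UNIV. Phi p m k * Xi p k)"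
    by (simp add: algebra_simps sum_subtractf sum_distrib_left)
  also have "\<dots> = Phi p m i" by (simp add: sum_kd2 phixi assms)
  finally have A: "(\<Sum>k\<in>UNIV. Phi p m k * (\<Sum>l\<in>UNIV. Phi p k l * Dxi p i l)) = Phi p m i" .
  have "(\<Sum>k\<in>UNIV. Phi p m k * (\<Sum>l\<in>UNIV. Phi p k l * Dxi p i l)) = (\<Sum>l\<in>UNIV. (\<Sum>k\<in>UNIV. Phi p m k * Phi p k l) * Dxi p i l)"
    by (simp add: sum_distrib_left sum_distrib_right mult_ac) (rule sum.swap)
  also have "\<dots> = (\<Sum>l\<in>UNIV. (- kdelta m l + Eta p l * Xi p m) * Dxi p i l)"
    by (simp add: phi2 assms)
  also have "\<dots> = - (\<Sum>l\<in>UNIV. kdelta m l * Dxi p i l) + Xi p m * (\<Sum>l\<in>UNIV. Eta p l * Dxi p i l)"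
    by (simp add: algebra_simps sum.distrib sum_subtractf sum_negf sum_distrib_left)
  also have "\<dots> = - Dxi p i m + Xi p m * (\<Sum>l\<in>UNIV. Eta p l * Dxi p i l)"
    by (simp add: sum_kd1)
  finally show ?thesis using A by simp
qed

lemma dEta_raw: assumes "p \<in> U"
  shows "pd (\<lambda>q. Eta q k) i p = (\<Sum>l\<in>UNIV. pd (\<lambda>q. G q k l) i p * Xi p l + G p k l * pd (\<lambda>q. Xi q l) i p)"
proof -
  have "pd (\<lambda>q. Eta q k) i p = pd (\<lambda>q. \<Sum>l\<in>UNIV. G q k l * Xi q l) i p"
    by (rule pd_local[OF openU assms]) (simp add: gxi)
  also have "\<dots> = (\<Sum>l\<in>UNIV. pd (\<lambda>q. G q k l) i p * Xi p l + G p k l * pd (\<lambda>q. Xi q l) i p)"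
    by (simp add: pd_sum pd_mult Dp_mult DG DXi assms)
  finally show ?thesis .
qed

lemma step5: assumes "p \<in> U"
  shows "(\<Sum>l\<in>UNIV. Eta p l * Dxi p i l) = 0"
proof -
  have "pd (\<lambda>q. \<Sum>k\<in>UNIV. Eta q k * Xi q k) i p = 0"
    by (rule pd_zero_on[OF assms]) (simp add: etaxi)
  moreover have "pd (\<lambda>q. \<Sum>k\<in>UNIV. Eta q k * Xi q k) i p = (\<Sum>k\<in>UNIV. pd (\<lambda>q. Eta q k) i p * Xi p k + Eta p k * pd (\<lambda>q. Xi q k) i p)"
    by (simp add: pd_sum pd_mult Dp_mult DEta DXi assms)
  ultimately have E0: "(\<Sum>k\<in>UNIV. pd (\<lambda>q. Eta q k) i p * Xi p k) + (\<Sum>k\<in>UNIV. Eta p k * pd (\<lambda>q. Xi q k) i p) = 0"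
    by (simp add: sum.distrib)
  have "(\<Sum>k\<in>UNIV. pd (\<lambda>q. Eta q k) i p * Xi p k)
      = (\<Sum>k\<in>UNIV. \<Sum>l\<in>UNIV. pd (\<lambda>q. G q k l) i p * Xi p l * Xi p k) + (\<Sum>k\<in>UNIV. \<Sum>l\<in>UNIV. G p k l * pd (\<lambda>q. Xi q l) i p * Xi p k)"
    by (simp add: dEta_raw assms sum_distrib_right sum.distrib distrib_right)
  also have "(\<Sum>k\<in>UNIV. \<Sum>l\<in>UNIV. G p k l * pd (\<lambda>q. Xi q l) i p * Xi p k) = (\<Sum>l\<in>UNIV. Eta p l * pd (\<lambda>q. Xi q l) i p)"
  proof -
    have "(\<Sum>k\<in>UNIV. \<Sum>l\<in>UNIV. G p k l * pd (\<lambda>q. Xi q l) i p * Xi p k) = (\<Sum>l\<in>UNIV. \<Sum>k\<in>UNIV. G p l k * Xi p k * pd (\<lambda>q. Xi q l) i p)"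
      by (subst sum.swap) (simp add: Gsym[OF assms] mult_ac)
    also have "\<dots> = (\<Sum>l\<in>UNIV. (\<Sum>k\<in>UNIV. G p l k * Xi p k) * pd (\<lambda>q. Xi q l) i p)"
      by (simp add: sum_distrib_right)
    finally show ?thesis by (simp add: gxi assms)
  qed
  also have "(\<Sum>k\<in>UNIV. \<Sum>l\<in>UNIV. pd (\<lambda>q. G q k l) i p * Xi p l * Xi p k) = 2 * (\<Sum>k\<in>UNIV. \<Sum>m\<in>UNIV. Eta p m * Chr p m i k * Xi p k)"
  proof -
    have "(\<Sum>k\<in>UNIV. \<Sum>l\<in>UNIV. pd (\<lambda>q. G q k l) i p * Xi p l * Xi p k)
       = (\<Sum>k\<in>UNIV. \<Sum>l\<in>UNIV. \<Sum>m\<in>UNIV. Chr p m i k * G p m l * Xi p l * Xi p k)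
       + (\<Sum>k\<in>UNIV. \<Sum>l\<in>UNIV. \<Sum>m\<in>UNIV. Chr p m i l * G p k m * Xi p l * Xi p k)"
      by (simp add: metric_compat assms sum_distrib_right sum.distrib distrib_right)
    also have "(\<Sum>k\<in>UNIV. \<Sum>l\<in>UNIV. \<Sum>m\<in>UNIV. Chr p m i k * G p m l * Xi p l * Xi p k)
        = (\<Sum>k\<in>UNIV. \<Sum>m\<in>UNIV. Eta p m * Chr p m i k * Xi p k)"
    proof -
      have "(\<Sum>k\<in>UNIV. \<Sum>l\<in>UNIV. \<Sum>m\<in>UNIV. Chr p m i k * G p m l * Xi p l * Xi p k)
          = (\<Sum>k\<in>UNIV. \<Sum>m\<in>UNIV. \<Sum>l\<in>UNIV. Chr p m i k * G p m l * Xi p l * Xi p k)"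
        by (rule sum.cong[OF refl], rule sum.swap)
      also have "\<dots> = (\<Sum>k\<in>UNIV. \<Sum>m\<in>UNIV. (\<Sum>l\<in>UNIV. G p m l * Xi p l) * Chr p m i k * Xi p k)"
        by (simp add: sum_distrib_right sum_distrib_left mult_ac)
      finally show ?thesis by (simp add: gxi assms)
    qed
    also have "(\<Sum>k\<in>UNIV. \<Sum>l\<in>UNIV. \<Sum>m\<in>UNIV. Chr p m i l * G p k m * Xi p l * Xi p k)
        = (\<Sum>k\<in>UNIV. \<Sum>m\<in>UNIV. Eta p m * Chr p m i k * Xi p k)"
    proof -
      have "(\<Sum>k\<in>UNIV. \<Sum>l\<in>UNIV. \<Sum>m\<in>UNIV. Chr p m i l * G p k m * Xi p l * Xi p k)
          = (\<Sum>l\<in>UNIV. \<Sum>m\<in>UNIV. \<Sum>k\<in>UNIV. Chr p m i l * G p k m * Xi p l * Xi p k)"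
        by (rule sum_swap3)
      also have "\<dots> = (\<Sum>l\<in>UNIV. \<Sum>m\<in>UNIV. (\<Sum>k\<in>UNIV. G p k m * Xi p k) * Chr p m i l * Xi p l)"
        by (simp add: sum_distrib_right sum_distrib_left mult_ac)
      finally show ?thesis by (simp add: gxi2 assms)
    qed
    finally show ?thesis by simp
  qed
  finally have "2 * (\<Sum>k\<in>UNIV. \<Sum>m\<in>UNIV. Eta p m * Chr p m i k * Xi p k) + 2 * (\<Sum>l\<in>UNIV. Eta p l * pd (\<lambda>q. Xi q l) i p) = 0"
    using E0 by simp
  moreover have "(\<Sum>l\<in>UNIV. Eta p l * Dxi p i l) = (\<Sum>l\<in>UNIV. Eta p l * pd (\<lambda>q. Xi q l) i p) + (\<Sum>k\<in>UNIV. \<Sum>m\<in>UNIV. Eta p m * Chr p m i k * Xi p k)"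
  proof -
    have "(\<Sum>l\<in>UNIV. Eta p l * Dxi p i l) = (\<Sum>l\<in>UNIV. Eta p l * pd (\<lambda>q. Xi q l) i p) + (\<Sum>m\<in>UNIV. \<Sum>k\<in>UNIV. Eta p m * Chr p m i k * Xi p k)"
      unfolding Dxi_def by (simp add: algebra_simps sum.distrib sum_distrib_left)
    also have "(\<Sum>m\<in>UNIV. \<Sum>k\<in>UNIV. Eta p m * Chr p m i k * Xi p k) = (\<Sum>k\<in>UNIV. \<Sum>m\<in>UNIV. Eta p m * Chr p m i k * Xi p k)"
      by (rule sum.swap)
    finally show ?thesis .
  qed
  ultimately show ?thesis by simp
qed

lemma nabla_xi: assumes "p \<in> U"
  shows "pd (\<lambda>q. Xi q k) i p + (\<Sum>l\<in>UNIV. Chr p k i l * Xi p l) = - Phi p k i"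
  using step4[OF assms, of i k] step5[OF assms, of i] unfolding Dxi_def by simp

end



context sas begin

definition "hh p i j = (\<Sum>k\<in>UNIV. G p i k * Phi p k j)"

lemma hh_sym: assumes "p \<in> U" shows "hh p m i = hh p i m"
proof -
  have "(\<Sum>j\<in>UNIV. (\<Sum>a\<in>UNIV. \<Sum>b\<in>UNIV. G p a b * Phi p a i * Phi p b j) * Phi p j m)
      = (\<Sum>a\<in>UNIV. \<Sum>b\<in>UNIV. G p a b * Phi p a i * (\<Sum>j\<in>UNIV. Phi p b j * Phi p j m))"
    unfolding sum_distrib_right sum_distrib_left
    by (subst sum_swap3) (simp add: mult_ac)
  also have "\<dots> = (\<Sum>a\<in>UNIV. \<Sum>b\<in>UNIV. G p a b * Phi p a i * (- kdelta b m + Eta p m * Xi p b))"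
    by (simp add: phi2 assms)
  also have "\<dots> = - (\<Sum>a\<in>UNIV. \<Sum>b\<in>UNIV. kdelta b m * (G p a b * Phi p a i)) + Eta p m * (\<Sum>a\<in>UNIV. Phi p a i * (\<Sum>b\<in>UNIV. G p a b * Xi p b))"
    by (simp add: algebra_simps sum.distrib sum_subtractf sum_negf sum_distrib_left)
  also have "\<dots> = - (\<Sum>a\<in>UNIV. G p a m * Phi p a i) + Eta p m * (\<Sum>a\<in>UNIV. Phi p a i * Eta p a)"
    by (simp add: sum_kd2 gxi assms)
  also have "\<dots> = - hh p m i"
  proof -
    have "(\<Sum>a\<in>UNIV. G p a m * Phi p a i) = hh p m i"
      unfolding hh_def by (rule sum.cong[OF refl]) (metis Gsym assms)
    moreover have "(\<Sum>a\<in>UNIV. Phi p a i * Eta p a) = 0" using etaphi[OF assms, of i] by (simp add: mult.commute)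
    ultimately show ?thesis by simp
  qed
  finally have L: "(\<Sum>j\<in>UNIV. (\<Sum>a\<in>UNIV. \<Sum>b\<in>UNIV. G p a b * Phi p a i * Phi p b j) * Phi p j m) = - hh p m i" .
  have "(\<Sum>j\<in>UNIV. (- G p i j + Eta p i * Eta p j) * Phi p j m) = - hh p i m + Eta p i * (\<Sum>j\<in>UNIV. Eta p j * Phi p j m)"
    unfolding hh_def by (simp add: algebra_simps sum.distrib sum_subtractf sum_negf sum_distrib_left)
  also have "\<dots> = - hh p i m" by (simp add: etaphi assms)
  finally show ?thesis using L compat[OF assms] by simp
qed

lemma hh_xi: assumes "p \<in> U" shows "(\<Sum>j\<in>UNIV. hh p i j * Xi p j) = 0"
proof -
  have "(\<Sum>j\<in>UNIV. hh p i j * Xi p j) = (\<Sum>k\<in>UNIV. G p i k * (\<Sum>j\<in>UNIV. Phi p k j * Xi p j))"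
    unfolding hh_def sum_distrib_right sum_distrib_left by (subst sum.swap) (simp add: mult_ac)
  then show ?thesis by (simp add: phixi assms)
qed

lemma lie_xi: assumes "p \<in> U" shows "lie_deriv_metric G Xi p i j = - 2 * hh p i j"
proof -
  have dx: "pd (\<lambda>q. Xi q k) i p = - Phi p k i - (\<Sum>l\<in>UNIV. Chr p k i l * Xi p l)" for k i
    using nabla_xi[OF assms, of k i] by simp
  have "lie_deriv_metric G Xi p i j =
     (\<Sum>k\<in>UNIV. \<Sum>l\<in>UNIV. Xi p k * Chr p l k i * G p l j) + (\<Sum>k\<in>UNIV. \<Sum>l\<in>UNIV. Xi p k * Chr p l k j * G p i l)
     - (\<Sum>k\<in>UNIV. G p k j * Phi p k i) - (\<Sum>k\<in>UNIV. \<Sum>l\<in>UNIV. G p k j * Chr p k i l * Xi p l)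
     - (\<Sum>k\<in>UNIV. G p i k * Phi p k j) - (\<Sum>k\<in>UNIV. \<Sum>l\<in>UNIV. G p i k * Chr p k j l * Xi p l)"
    unfolding lie_deriv_metric_def dx metric_compat[OF assms]
    by (simp add: algebra_simps sum.distrib sum_subtractf sum_distrib_left)
  also have "(\<Sum>k\<in>UNIV. \<Sum>l\<in>UNIV. Xi p k * Chr p l k i * G p l j) = (\<Sum>k\<in>UNIV. \<Sum>l\<in>UNIV. G p k j * Chr p k i l * Xi p l)"
    by (subst sum.swap) (simp add: chr_sym[OF assms] mult_ac)
  also have "(\<Sum>k\<in>UNIV. \<Sum>l\<in>UNIV. Xi p k * Chr p l k j * G p i l) = (\<Sum>k\<in>UNIV. \<Sum>l\<in>UNIV. G p i k * Chr p k j l * Xi p l)"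
    by (subst sum.swap) (simp add: chr_sym[OF assms] mult_ac)
  also have "(\<Sum>k\<in>UNIV. G p k j * Phi p k i) = hh p j i"
    unfolding hh_def by (rule sum.cong[OF refl]) (metis Gsym assms)
  finally show ?thesis using hh_sym[OF assms, of j i] by (simp add: hh_def)
qed

end



context sas begin

lemma kdelta_trace: "(\<Sum>l\<in>UNIV. kdelta l (l::'m)) = real (2 * n + 1)"
  using card by (simp add: kdelta_def)

lemma R_id: assumes "p \<in> U"
  shows "pd (pd (\<lambda>q. Xi q l) j) l p + (\<Sum>m\<in>UNIV. pd (\<lambda>q. Chr q l j m) l p * Xi p m + Chr p l j m * pd (\<lambda>q. Xi q m) l p)
       = - pd (\<lambda>q. Phi q l j) l p"
proof -
  have "pd (\<lambda>q. pd (\<lambda>q. Xi q l) j q + (\<Sum>m\<in>UNIV. Chr q l j m * Xi q m)) l p = pd (\<lambda>q. - Phi q l j) l p"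
    by (rule pd_local[OF openU assms]) (simp add: nabla_xi)
  moreover have "pd (\<lambda>q. pd (\<lambda>q. Xi q l) j q + (\<Sum>m\<in>UNIV. Chr q l j m * Xi q m)) l p
     = pd (pd (\<lambda>q. Xi q l) j) l p + (\<Sum>m\<in>UNIV. pd (\<lambda>q. Chr q l j m) l p * Xi p m + Chr p l j m * pd (\<lambda>q. Xi q m) l p)"
    by (simp add: pd_add pd_sum pd_mult Dp_sum Dp_mult DdXi DChr DXi assms)
  moreover have "pd (\<lambda>q. - Phi q l j) l p = - pd (\<lambda>q. Phi q l j) l p"
    by (simp add: pd_minus DPhi assms)
  ultimately show ?thesis by simp
qed

lemma R_id2: assumes "p \<in> U"
  shows "pd (pd (\<lambda>q. Xi q l) l) j p + (\<Sum>m\<in>UNIV. pd (\<lambda>q. Chr q l l m) j p * Xi p m + Chr p l l m * pd (\<lambda>q. Xi q m) j p)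
       = - pd (\<lambda>q. Phi q l l) j p"
proof -
  have "pd (\<lambda>q. pd (\<lambda>q. Xi q l) l q + (\<Sum>m\<in>UNIV. Chr q l l m * Xi q m)) j p = pd (\<lambda>q. - Phi q l l) j p"
    by (rule pd_local[OF openU assms]) (simp add: nabla_xi)
  moreover have "pd (\<lambda>q. pd (\<lambda>q. Xi q l) l q + (\<Sum>m\<in>UNIV. Chr q l l m * Xi q m)) j p
     = pd (pd (\<lambda>q. Xi q l) l) j p + (\<Sum>m\<in>UNIV. pd (\<lambda>q. Chr q l l m) j p * Xi p m + Chr p l l m * pd (\<lambda>q. Xi q m) j p)"
    by (simp add: pd_add pd_sum pd_mult Dp_sum Dp_mult DdXi DChr DXi assms)
  moreover have "pd (\<lambda>q. - Phi q l l) j p = - pd (\<lambda>q. Phi q l l) j p"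
    by (simp add: pd_minus DPhi assms)
  ultimately show ?thesis by simp
qed

lemma clair_xi: assumes "p \<in> U"
  shows "pd (pd (\<lambda>q. Xi q l) j) l p = pd (pd (\<lambda>q. Xi q l) l) j p"
  by (rule clairaut[OF openU assms]) (auto simp: DXi DdXi C2_cont smooth)


lemma ricci_xi: assumes "p \<in> U"
  shows "(\<Sum>k\<in>UNIV. ricci G p j k * Xi p k) = 2 * real n * Eta p j"
proof -
  define A1 where "A1 = (\<Sum>l\<in>UNIV. pd (pd (\<lambda>q. Xi q l) j) l p)"
  define A2 where "A2 = (\<Sum>l\<in>UNIV. pd (pd (\<lambda>q. Xi q l) l) j p)"
  define B1 where "B1 = (\<Sum>l\<in>UNIV. \<Sum>m\<in>UNIV. pd (\<lambda>q. Chr q l j m) l p * Xi p m)"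
  define B2 where "B2 = (\<Sum>l\<in>UNIV. \<Sum>m\<in>UNIV. pd (\<lambda>q. Chr q l l m) j p * Xi p m)"
  define C1 where "C1 = (\<Sum>l\<in>UNIV. \<Sum>m\<in>UNIV. Chr p l j m * pd (\<lambda>q. Xi q m) l p)"
  define C2 where "C2 = (\<Sum>l\<in>UNIV. \<Sum>m\<in>UNIV. Chr p l l m * pd (\<lambda>q. Xi q m) j p)"
  define F1 where "F1 = (\<Sum>l\<in>UNIV. pd (\<lambda>q. Phi q l j) l p)"
  define F2 where "F2 = (\<Sum>l\<in>UNIV. pd (\<lambda>q. Phi q l l) j p)"
  define E1 where "E1 = (\<Sum>l\<in>UNIV. \<Sum>m\<in>UNIV. Chr p l j m * Phi p m l)"
  define E2 where "E2 = (\<Sum>l\<in>UNIV. \<Sum>m\<in>UNIV. Chr p m j l * Phi p l m)"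
  define E3 where "E3 = (\<Sum>l\<in>UNIV. \<Sum>m\<in>UNIV. Chr p l l m * Phi p m j)"
  define E4 where "E4 = (\<Sum>l\<in>UNIV. \<Sum>m\<in>UNIV. Chr p m l j * Phi p l m)"
  define Q1 where "Q1 = (\<Sum>l\<in>UNIV. \<Sum>m\<in>UNIV. \<Sum>s\<in>UNIV. Chr p l j m * Chr p m l s * Xi p s)"
  define Q2 where "Q2 = (\<Sum>l\<in>UNIV. \<Sum>m\<in>UNIV. \<Sum>s\<in>UNIV. Chr p l l m * Chr p m j s * Xi p s)"
  have dx: "pd (\<lambda>q. Xi q k) i p = - Phi p k i - (\<Sum>l\<in>UNIV. Chr p k i l * Xi p l)" for k i
    using nabla_xi[OF assms, of k i] by simp
  have r1: "A1 + B1 + C1 = - F1"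
  proof -
    have "(\<Sum>l\<in>UNIV. pd (pd (\<lambda>q. Xi q l) j) l p + (\<Sum>m\<in>UNIV. pd (\<lambda>q. Chr q l j m) l p * Xi p m + Chr p l j m * pd (\<lambda>q. Xi q m) l p))
       = (\<Sum>l\<in>UNIV. - pd (\<lambda>q. Phi q l j) l p)"
      by (rule sum.cong[OF refl]) (rule R_id[OF assms])
    then show ?thesis unfolding A1_def B1_def C1_def F1_def by (simp add: sum.distrib sum_negf)
  qed
  have r2: "A2 + B2 + C2 = - F2"
  proof -
    have "(\<Sum>l\<in>UNIV. pd (pd (\<lambda>q. Xi q l) l) j p + (\<Sum>m\<in>UNIV. pd (\<lambda>q. Chr q l l m) j p * Xi p m + Chr p l l m * pd (\<lambda>q. Xi q m) j p))
       = (\<Sum>l\<in>UNIV. - pd (\<lambda>q. Phi q l l) j p)"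
      by (rule sum.cong[OF refl]) (rule R_id2[OF assms])
    then show ?thesis unfolding A2_def B2_def C2_def F2_def by (simp add: sum.distrib sum_negf)
  qed
  have a12: "A1 = A2" unfolding A1_def A2_def by (rule sum.cong[OF refl]) (rule clair_xi[OF assms])
  have c1: "C1 = - E1 - Q1"
    unfolding C1_def E1_def Q1_def dx by (simp add: algebra_simps sum.distrib sum_subtractf sum_negf sum_distrib_left)
  have c2: "C2 = - E3 - Q2"
    unfolding C2_def E3_def Q2_def dx by (simp add: algebra_simps sum.distrib sum_subtractf sum_negf sum_distrib_left)
  have e12: "E2 = E1" unfolding E1_def E2_def by (rule sum.swap)
  have e42: "E4 = E2" unfolding E4_def E2_def by (simp add: chr_sym[OF assms, of _ _ j])
  have s1: "F1 + E3 - E4 = - 2 * real n * Eta p j"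
  proof -
    have "(\<Sum>l\<in>UNIV. cov_deriv_11 G Phi p l l j) = F1 + E3 - E4"
      unfolding cov_deriv_11_def F1_def E3_def E4_def by (simp add: sum.distrib sum_subtractf)
    moreover have "(\<Sum>l\<in>UNIV. cov_deriv_11 G Phi p l l j) = - 2 * real n * Eta p j"
    proof -
      have "(\<Sum>l\<in>UNIV. cov_deriv_11 G Phi p l l j) = (\<Sum>l\<in>UNIV. - G p l j * Xi p l - Eta p j * kdelta l (l::'m) + 2 * Eta p l * Eta p j * Xi p l)"
        by (simp add: sasaki assms)
      also have "\<dots> = - (\<Sum>l\<in>UNIV. G p l j * Xi p l) - Eta p j * (\<Sum>l\<in>UNIV. kdelta l (l::'m)) + 2 * Eta p j * (\<Sum>l\<in>UNIV. Eta p l * Xi p l)"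
        by (simp add: algebra_simps sum.distrib sum_subtractf sum_negf sum_distrib_left)
      also have "\<dots> = - 2 * real n * Eta p j"
        using gxi2[OF assms, of j] etaxi[OF assms] kdelta_trace by (simp add: algebra_simps)
      finally show ?thesis .
    qed
    ultimately show ?thesis by simp
  qed
  have s2: "F2 + E1 - E2 = 0"
  proof -
    have "(\<Sum>l\<in>UNIV. cov_deriv_11 G Phi p j l l) = F2 + E1 - E2"
      unfolding cov_deriv_11_def F2_def E1_def E2_def by (simp add: sum.distrib sum_subtractf)
    moreover have "(\<Sum>l\<in>UNIV. cov_deriv_11 G Phi p j l l) = 0"
    proof -
      have "(\<Sum>l\<in>UNIV. cov_deriv_11 G Phi p j l l) = (\<Sum>l\<in>UNIV. - G p j l * Xi p l - Eta p l * kdelta l j + 2 * Eta p j * Eta p l * Xi p l)"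
        by (simp add: sasaki assms)
      also have "\<dots> = - (\<Sum>l\<in>UNIV. G p j l * Xi p l) - (\<Sum>l\<in>UNIV. kdelta l j * Eta p l) + 2 * Eta p j * (\<Sum>l\<in>UNIV. Eta p l * Xi p l)"
        by (simp add: algebra_simps sum.distrib sum_subtractf sum_negf sum_distrib_left)
      also have "\<dots> = 0"
        by (simp add: gxi etaxi sum_kd2 assms)
      finally show ?thesis .
    qed
    ultimately show ?thesis by simp
  qed
  have ric: "(\<Sum>k\<in>UNIV. ricci G p j k * Xi p k) = B1 - B2 + Q2 - Q1"
  proof -
    have "(\<Sum>k\<in>UNIV. ricci G p j k * Xi p k) =
       (\<Sum>k\<in>UNIV. \<Sum>l\<in>UNIV. pd (\<lambda>q. Chr q l j k) l p * Xi p k) - (\<Sum>k\<in>UNIV. \<Sum>l\<in>UNIV. pd (\<lambda>q. Chr q l l k) j p * Xi p k)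
       + (\<Sum>k\<in>UNIV. \<Sum>l\<in>UNIV. \<Sum>m\<in>UNIV. Chr p l l m * Chr p m j k * Xi p k)
       - (\<Sum>k\<in>UNIV. \<Sum>l\<in>UNIV. \<Sum>m\<in>UNIV. Chr p l j m * Chr p m l k * Xi p k)"
      unfolding ricci_def by (simp add: algebra_simps sum.distrib sum_subtractf sum_distrib_right sum_distrib_left)
    also have "(\<Sum>k\<in>UNIV. \<Sum>l\<in>UNIV. pd (\<lambda>q. Chr q l j k) l p * Xi p k) = B1"
      unfolding B1_def by (rule sum.swap)
    also have "(\<Sum>k\<in>UNIV. \<Sum>l\<in>UNIV. pd (\<lambda>q. Chr q l l k) j p * Xi p k) = B2"
      unfolding B2_def by (rule sum.swap)
    also have "(\<Sum>k\<in>UNIV. \<Sum>l\<in>UNIV. \<Sum>m\<in>UNIV. Chr p l l m * Chr p m j k * Xi p k) = Q2"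
      unfolding Q2_def by (rule sum_swap3)
    also have "(\<Sum>k\<in>UNIV. \<Sum>l\<in>UNIV. \<Sum>m\<in>UNIV. Chr p l j m * Chr p m l k * Xi p k) = Q1"
      unfolding Q1_def by (rule sum_swap3)
    finally show ?thesis .
  qed
  show ?thesis using ric r1 r2 a12 c1 c2 e12 e42 s1 s2 by linarith
qed

end



context sas begin

definition "PP p i k = G p i k - Eta p i * Eta p k"

lemma P_phi: assumes "p \<in> U" shows "(\<Sum>k\<in>UNIV. PP p i k * Phi p k m) = hh p i m"
proof -
  have "(\<Sum>k\<in>UNIV. PP p i k * Phi p k m) = hh p i m - Eta p i * (\<Sum>k\<in>UNIV. Eta p k * Phi p k m)"
    unfolding PP_def hh_def by (simp add: algebra_simps sum_subtractf sum_distrib_left)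
  then show ?thesis by (simp add: etaphi assms)
qed

lemma hh_phi: assumes "p \<in> U" shows "(\<Sum>k\<in>UNIV. hh p i k * Phi p k m) = - PP p i m"
proof -
  have "(\<Sum>k\<in>UNIV. hh p i k * Phi p k m) = (\<Sum>l\<in>UNIV. G p i l * (\<Sum>k\<in>UNIV. Phi p l k * Phi p k m))"
    unfolding hh_def sum_distrib_right sum_distrib_left by (subst sum.swap) (simp add: mult_ac)
  also have "\<dots> = (\<Sum>l\<in>UNIV. G p i l * (- kdelta l m + Eta p m * Xi p l))"
    by (simp add: phi2 assms)
  also have "\<dots> = - (\<Sum>l\<in>UNIV. kdelta l m * G p i l) + Eta p m * (\<Sum>l\<in>UNIV. G p i l * Xi p l)"
    by (simp add: algebra_simps sum.distrib sum_subtractf sum_negf sum_distrib_left)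
  also have "\<dots> = - PP p i m"
    by (simp add: sum_kd2 gxi assms PP_def)
  finally show ?thesis .
qed

lemma P_nz: assumes "p \<in> U" shows "\<exists>i k. PP p i k \<noteq> 0"
proof (rule ccontr)
  assume "\<not> (\<exists>i k. PP p i k \<noteq> 0)"
  then have Gee: "G p i k = Eta p i * Eta p k" for i k unfolding PP_def by auto
  define w where "w k = (\<Sum>l\<in>UNIV. Eta p l * metric_inv G p l k)" for k
  have iw: "Eta p i * w k = kdelta i k" for i k
    using ginv_right[OF assms, of i k] unfolding w_def Gee by (simp add: sum_distrib_left mult_ac)
  have "CARD('m) \<ge> 2" using card n1 by simp
  then obtain x y :: 'm where "x \<noteq> y"
    by (metis (full_types) card_2_iff' card_le_Suc_iff numeral_2_eq_2 ex_in_conv UNIV_I finite_UNIV n_not_Suc_n)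
  then show False using iw[of x y] iw[of x x] iw[of y y] by (auto simp: kdelta_def)
qed

lemma ab_zero: assumes "p \<in> U" and E: "\<And>i k. a * PP p i k + b * hh p i k = 0"
  shows "a = 0 \<and> b = 0"
proof -
  have F: "a * hh p i m - b * PP p i m = 0" for i m
  proof -
    have "(\<Sum>k\<in>UNIV. (a * PP p i k + b * hh p i k) * Phi p k m) = 0" by (simp add: E)
    moreover have "(\<Sum>k\<in>UNIV. (a * PP p i k + b * hh p i k) * Phi p k m)
        = a * (\<Sum>k\<in>UNIV. PP p i k * Phi p k m) + b * (\<Sum>k\<in>UNIV. hh p i k * Phi p k m)"
      by (simp add: algebra_simps sum.distrib sum_distrib_left)
    ultimately show ?thesis by (simp add: P_phi hh_phi assms)
  qed
  have Z: "(a * a + b * b) * PP p i m = 0" for i m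
  proof -
    have "(a * a + b * b) * PP p i m = a * (a * PP p i m + b * hh p i m) - b * (a * hh p i m - b * PP p i m)"
      by (simp add: algebra_simps)
    then show ?thesis using E[of i m] F[of i m] by simp
  qed
  obtain i m where "PP p i m \<noteq> 0" using P_nz[OF assms(1)] by blast
  then have "a * a + b * b = 0" using Z[of i m] by simp
  then show ?thesis by (simp add: sum_squares_eq_zero_iff)
qed

end



context sas begin

lemma ricci_formula: assumes sol: "ricci_like_soliton U G Phi Eta Xi lam mu nu" and p: "p \<in> U"
  shows "ricci G p i j = - lam * G p i j + (1 - mu) * hh p i j - (mu + nu) * (Eta p i * Eta p j)"
proof -
  have "(1/2) * lie_deriv_metric G Xi p i j + ricci G p i j + lam * G p i j
       + mu * assoc_metric G Phi Eta p i j + nu * Eta p i * Eta p j = 0"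
    using sol p unfolding ricci_like_soliton_def by blast
  moreover have "assoc_metric G Phi Eta p i j = hh p i j + Eta p i * Eta p j"
    unfolding assoc_metric_def hh_def ..
  ultimately show ?thesis by (simp add: lie_xi p algebra_simps)
qed

lemma lam_sum: assumes sol: "ricci_like_soliton U G Phi Eta Xi lam mu nu" and p: "p \<in> U"
  shows "lam + mu + nu = - 2 * real n"
proof -
  have E: "(2 * real n + lam + mu + nu) * Eta p j = 0" for j
  proof -
    have "(\<Sum>k\<in>UNIV. ricci G p j k * Xi p k)
       = - lam * (\<Sum>k\<in>UNIV. G p j k * Xi p k) + (1 - mu) * (\<Sum>k\<in>UNIV. hh p j k * Xi p k) - (mu + nu) * Eta p j * (\<Sum>k\<in>UNIV. Eta p k * Xi p k)"
      by (simp add: ricci_formula[OF sol p] algebra_simps sum.distrib sum_subtractf sum_negf sum_distrib_left)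
    also have "\<dots> = - lam * Eta p j - (mu + nu) * Eta p j"
      by (simp add: gxi hh_xi etaxi p)
    finally show ?thesis using ricci_xi[OF p, of j] by (simp add: algebra_simps)
  qed
  have "(\<Sum>j\<in>UNIV. (2 * real n + lam + mu + nu) * Eta p j * Xi p j) = 0" by (simp only: E) simp
  moreover have "(\<Sum>j\<in>UNIV. (2 * real n + lam + mu + nu) * Eta p j * Xi p j) = (2 * real n + lam + mu + nu) * (\<Sum>j\<in>UNIV. Eta p j * Xi p j)"
    by (simp add: sum_distrib_left mult.assoc)
  ultimately have "(2 * real n + lam + mu + nu) * (\<Sum>j\<in>UNIV. Eta p j * Xi p j) = 0" by simp
  then show ?thesis by (simp add: etaxi p)
qed

lemma dEta: assumes p: "p \<in> U"
  shows "pd (\<lambda>q. Eta q k) i p = (\<Sum>m\<in>UNIV. Chr p m i k * Eta p m) - hh p i k"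
proof -
  have dx: "pd (\<lambda>q. Xi q l) i p = - Phi p l i - (\<Sum>m\<in>UNIV. Chr p l i m * Xi p m)" for l
    using nabla_xi[OF p, of l i] by simp
  define U1 where "U1 = (\<Sum>l\<in>UNIV. \<Sum>m\<in>UNIV. Chr p m i l * G p k m * Xi p l)"
  define U2 where "U2 = (\<Sum>l\<in>UNIV. \<Sum>m\<in>UNIV. G p k l * Chr p l i m * Xi p m)"
  define V where "V = (\<Sum>l\<in>UNIV. \<Sum>m\<in>UNIV. Chr p m i k * G p m l * Xi p l)"
  have "pd (\<lambda>q. Eta q k) i p = V + U1 - (\<Sum>l\<in>UNIV. G p k l * Phi p l i) - U2"
    unfolding dEta_raw[OF p] metric_compat[OF p] dx U1_def U2_def V_def
    by (simp add: algebra_simps sum.distrib sum_subtractf sum_distrib_left sum_distrib_right)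
  also have "V = (\<Sum>m\<in>UNIV. Chr p m i k * Eta p m)"
  proof -
    have "V = (\<Sum>m\<in>UNIV. \<Sum>l\<in>UNIV. Chr p m i k * G p m l * Xi p l)" unfolding V_def by (rule sum.swap)
    also have "\<dots> = (\<Sum>m\<in>UNIV. Chr p m i k * (\<Sum>l\<in>UNIV. G p m l * Xi p l))"
      by (simp add: sum_distrib_left mult_ac)
    finally show ?thesis by (simp add: gxi p)
  qed
  also have "U1 = U2" unfolding U1_def U2_def by (subst sum.swap) (simp add: mult_ac)
  also have "(\<Sum>l\<in>UNIV. G p k l * Phi p l i) = hh p i k"
    using hh_sym[OF p, of k i] by (simp add: hh_def)
  finally show ?thesis by simp
qed

lemma N_h: assumes p: "p \<in> U"
  shows "pd (\<lambda>q. hh q j k) i p - (\<Sum>l\<in>UNIV. Chr p l i j * hh p l k + Chr p l i k * hh p j l)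
     = - G p i k * Eta p j - G p i j * Eta p k + 2 * Eta p i * Eta p j * Eta p k"
proof -
  have dphi: "pd (\<lambda>q. Phi q l k) i p = cov_deriv_11 G Phi p i l k - (\<Sum>m\<in>UNIV. Chr p l i m * Phi p m k - Chr p m i k * Phi p l m)" for l
    unfolding cov_deriv_11_def by simp
  define T1 where "T1 = (\<Sum>l\<in>UNIV. \<Sum>m\<in>UNIV. Chr p m i j * G p m l * Phi p l k)"
  define T2 where "T2 = (\<Sum>l\<in>UNIV. \<Sum>m\<in>UNIV. Chr p m i l * G p j m * Phi p l k)"
  define T3 where "T3 = (\<Sum>l\<in>UNIV. \<Sum>m\<in>UNIV. G p j l * Chr p l i m * Phi p m k)"
  define T4 where "T4 = (\<Sum>l\<in>UNIV. \<Sum>m\<in>UNIV. G p j l * Chr p m i k * Phi p l m)"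
  define SV where "SV = (\<Sum>l\<in>UNIV. G p j l * cov_deriv_11 G Phi p i l k)"
  have "pd (\<lambda>q. hh q j k) i p = (\<Sum>l\<in>UNIV. pd (\<lambda>q. G q j l) i p * Phi p l k + G p j l * pd (\<lambda>q. Phi q l k) i p)"
    unfolding hh_def by (simp add: pd_sum pd_mult Dp_mult DG DPhi p)
  also have "\<dots> = T1 + T2 + SV - T3 + T4"
    unfolding T1_def T2_def T3_def T4_def SV_def metric_compat[OF p] dphi
    by (simp add: algebra_simps sum.distrib sum_subtractf sum_distrib_left sum_distrib_right)
  finally have A: "pd (\<lambda>q. hh q j k) i p = T1 + T2 + SV - T3 + T4" .
  have B: "(\<Sum>l\<in>UNIV. Chr p l i j * hh p l k + Chr p l i k * hh p j l) = T1 + T4"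
  proof -
    have "T1 = (\<Sum>m\<in>UNIV. \<Sum>l\<in>UNIV. Chr p m i j * G p m l * Phi p l k)" unfolding T1_def by (rule sum.swap)
    then have "(\<Sum>l\<in>UNIV. Chr p l i j * hh p l k) = T1"
      unfolding hh_def by (simp add: sum_distrib_left mult_ac)
    moreover have "T4 = (\<Sum>m\<in>UNIV. \<Sum>l\<in>UNIV. G p j l * Chr p m i k * Phi p l m)" unfolding T4_def by (rule sum.swap)
    then have "(\<Sum>l\<in>UNIV. Chr p l i k * hh p j l) = T4"
      unfolding hh_def by (simp add: sum_distrib_left mult_ac)
    ultimately show ?thesis by (simp add: sum.distrib)
  qed
  have "T3 = (\<Sum>m\<in>UNIV. \<Sum>l\<in>UNIV. G p j l * Chr p l i m * Phi p m k)" unfolding T3_def by (rule sum.swap)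
  then have C: "T2 = T3" unfolding T2_def by (simp add: mult_ac)
  have D: "SV = - G p i k * Eta p j - G p i j * Eta p k + 2 * Eta p i * Eta p j * Eta p k"
  proof -
    have "SV = (\<Sum>l\<in>UNIV. G p j l * (- G p i k * Xi p l - Eta p k * kdelta l i + 2 * Eta p i * Eta p k * Xi p l))"
      unfolding SV_def by (simp add: sasaki p)
    also have "\<dots> = - G p i k * (\<Sum>l\<in>UNIV. G p j l * Xi p l) - Eta p k * (\<Sum>l\<in>UNIV. kdelta l i * G p j l)
        + 2 * Eta p i * Eta p k * (\<Sum>l\<in>UNIV. G p j l * Xi p l)"
      by (simp add: algebra_simps sum.distrib sum_subtractf sum_negf sum_distrib_left)
    also have "\<dots> = - G p i k * Eta p j - G p i j * Eta p k + 2 * Eta p i * Eta p j * Eta p k"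
      using Gsym[OF p, of j i] gxi[OF p, of j] by (simp add: sum_kd2 algebra_simps)
    finally show ?thesis .
  qed
  show ?thesis using A B C D by simp
qed

lemma N_eta: assumes p: "p \<in> U"
  shows "pd (\<lambda>q. Eta q j * Eta q k) i p - (\<Sum>l\<in>UNIV. Chr p l i j * (Eta p l * Eta p k) + Chr p l i k * (Eta p j * Eta p l))
     = - (hh p i j * Eta p k + hh p i k * Eta p j)"
proof -
  have "pd (\<lambda>q. Eta q j * Eta q k) i p = pd (\<lambda>q. Eta q j) i p * Eta p k + Eta p j * pd (\<lambda>q. Eta q k) i p"
    by (simp add: pd_mult DEta p)
  then show ?thesis unfolding dEta[OF p]
    by (simp add: algebra_simps sum.distrib sum_subtractf sum_distrib_left sum_distrib_right)
qed

lemma N_G: assumes p: "p \<in> U"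
  shows "pd (\<lambda>q. G q j k) i p - (\<Sum>l\<in>UNIV. Chr p l i j * G p l k + Chr p l i k * G p j l) = 0"
  by (simp add: metric_compat[OF p])

end



context sas begin

lemma cov_ricci: assumes sol: "ricci_like_soliton U G Phi Eta Xi lam mu nu" and p: "p \<in> U"
  shows "cov_deriv_02 G (ricci G) p i j k = (1 - mu) * (- G p i k * Eta p j - G p i j * Eta p k + 2 * Eta p i * Eta p j * Eta p k)
      + (mu + nu) * (hh p i j * Eta p k + hh p i k * Eta p j)"
proof -
  define b where "b = 1 - mu"
  define a where "a = mu + nu"
  define SG where "SG = (\<Sum>l\<in>UNIV. Chr p l i j * G p l k + Chr p l i k * G p j l)"
  define Sh where "Sh = (\<Sum>l\<in>UNIV. Chr p l i j * hh p l k + Chr p l i k * hh p j l)"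
  define Se where "Se = (\<Sum>l\<in>UNIV. Chr p l i j * (Eta p l * Eta p k) + Chr p l i k * (Eta p j * Eta p l))"
  have rf: "ricci G q i j = (- lam) * G q i j + b * hh q i j - a * (Eta q i * Eta q j)" if "q \<in> U" for q i j
    using ricci_formula[OF sol that] unfolding a_def b_def by simp
  have Dh: "Dp (\<lambda>q. hh q j k) p" unfolding hh_def by (intro Dp_sum Dp_mult DG DPhi p) simp
  have Dee: "Dp (\<lambda>q. Eta q j * Eta q k) p" by (intro Dp_mult DEta p)
  have "pd (\<lambda>q. ricci G q j k) i p = pd (\<lambda>q. (- lam) * G q j k + b * hh q j k - a * (Eta q j * Eta q k)) i p"
    by (rule pd_local[OF openU p]) (simp add: rf)
  also have "\<dots> = (- lam) * pd (\<lambda>q. G q j k) i p + b * pd (\<lambda>q. hh q j k) i p - a * pd (\<lambda>q. Eta q j * Eta q k) i p"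
    by (simp add: pd_add pd_diff pd_cmult Dp_add Dp_diff Dp_mult Dp_const DG Dh Dee p)
  finally have pdr: "pd (\<lambda>q. ricci G q j k) i p = (- lam) * pd (\<lambda>q. G q j k) i p + b * pd (\<lambda>q. hh q j k) i p - a * pd (\<lambda>q. Eta q j * Eta q k) i p" .
  have sr: "(\<Sum>l\<in>UNIV. Chr p l i j * ricci G p l k + Chr p l i k * ricci G p j l) = (- lam) * SG + b * Sh - a * Se"
    unfolding SG_def Sh_def Se_def rf[OF p]
    by (simp add: algebra_simps sum.distrib sum_subtractf sum_negf sum_distrib_left)
  have "cov_deriv_02 G (ricci G) p i j k = (- lam) * (pd (\<lambda>q. G q j k) i p - SG) + b * (pd (\<lambda>q. hh q j k) i p - Sh)
       - a * (pd (\<lambda>q. Eta q j * Eta q k) i p - Se)"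
    unfolding cov_deriv_02_def pdr sr by (simp add: algebra_simps)
  also have "\<dots> = b * (- G p i k * Eta p j - G p i j * Eta p k + 2 * Eta p i * Eta p j * Eta p k)
       + a * (hh p i j * Eta p k + hh p i k * Eta p j)"
  proof -
    have n1: "pd (\<lambda>q. G q j k) i p - SG = 0" unfolding SG_def by (rule N_G[OF p])
    have n2: "pd (\<lambda>q. hh q j k) i p - Sh = - G p i k * Eta p j - G p i j * Eta p k + 2 * Eta p i * Eta p j * Eta p k"
      unfolding Sh_def by (rule N_h[OF p])
    have n3: "pd (\<lambda>q. Eta q j * Eta q k) i p - Se = - (hh p i j * Eta p k + hh p i k * Eta p j)"
      unfolding Se_def by (rule N_eta[OF p])
    show ?thesis unfolding n1 n2 n3 by (simp add: algebra_simps)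
  qed
  finally show ?thesis unfolding a_def b_def .
qed

lemma contract_cov: assumes p: "p \<in> U"
  shows "(\<Sum>j\<in>UNIV. (b * (- G p i k * Eta p j - G p i j * Eta p k + 2 * Eta p i * Eta p j * Eta p k)
      + a * (hh p i j * Eta p k + hh p i k * Eta p j)) * Xi p j) = - b * PP p i k + a * hh p i k"
proof -
  have "(\<Sum>j\<in>UNIV. (b * (- G p i k * Eta p j - G p i j * Eta p k + 2 * Eta p i * Eta p j * Eta p k)
      + a * (hh p i j * Eta p k + hh p i k * Eta p j)) * Xi p j)
    = b * (- G p i k * (\<Sum>j\<in>UNIV. Eta p j * Xi p j) - Eta p k * (\<Sum>j\<in>UNIV. G p i j * Xi p j)
        + 2 * Eta p i * Eta p k * (\<Sum>j\<in>UNIV. Eta p j * Xi p j))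
      + a * (Eta p k * (\<Sum>j\<in>UNIV. hh p i j * Xi p j) + hh p i k * (\<Sum>j\<in>UNIV. Eta p j * Xi p j))"
    by (simp add: algebra_simps sum.distrib sum_subtractf sum_negf sum_distrib_left)
  also have "\<dots> = - b * PP p i k + a * hh p i k"
    using etaxi[OF p] gxi[OF p, of i] hh_xi[OF p, of i] by (simp add: PP_def algebra_simps)
  finally show ?thesis .
qed

end

theorem main_aux:
  fixes U :: "(real^'m::finite) set"
    and G Phi :: "real^'m \<Rightarrow> 'm \<Rightarrow> 'm \<Rightarrow> real"
    and Xi Eta :: "real^'m \<Rightarrow> 'm \<Rightarrow> real"
    and n :: nat and lam mu nu :: real
  assumes "n \<ge> 1" and "U \<noteq> {}"
    and "almost_contact_B_metric n U Phi Xi Eta G"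
    and "sasaki_like U Phi Xi Eta G"
    and sol: "ricci_like_soliton U G Phi Eta Xi lam mu nu"
  shows "(locally_ricci_symmetric U G \<longleftrightarrow> (lam, mu, nu) = (- 2 * real n, 1, -1))
       \<and> (locally_ricci_symmetric U G \<longleftrightarrow> einstein U G)"
proof -
  interpret sas U G Phi Xi Eta n using assms(1,3,4) by unfold_locales
  obtain p0 where p0: "p0 \<in> U" using assms(2) by blast
  have ls: "lam + mu + nu = - 2 * real n" by (rule lam_sum[OF sol p0])
  have T_LRS: "locally_ricci_symmetric U G" if "mu = 1" "nu = -1"
    unfolding locally_ricci_symmetric_def using that by (simp add: cov_ricci[OF sol])
  have LRS_T: "mu = 1 \<and> nu = -1" if L: "locally_ricci_symmetric U G"
  proof -
    have "- (1 - mu) * PP p0 i k + (mu + nu) * hh p0 i k = 0" for i k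
    proof -
      have "(\<Sum>j\<in>UNIV. cov_deriv_02 G (ricci G) p0 i j k * Xi p0 j) = 0"
        using L p0 unfolding locally_ricci_symmetric_def by simp
      then show ?thesis unfolding cov_ricci[OF sol p0] contract_cov[OF p0] .
    qed
    then have "- (1 - mu) = 0 \<and> mu + nu = 0" by (rule ab_zero[OF p0])
    then show ?thesis by simp
  qed
  have E_T: "mu = 1 \<and> nu = -1" if E: "einstein U G"
  proof -
    obtain c where c: "\<forall>p\<in>U. \<forall>i j. ricci G p i j = c * G p i j" using E unfolding einstein_def by blast
    have rel: "(- lam - c) * G p0 i k + (1 - mu) * hh p0 i k - (mu + nu) * (Eta p0 i * Eta p0 k) = 0" for i k
      using c p0 ricci_formula[OF sol p0, of i k] by (simp add: algebra_simps)
    have cc: "- lam - c = mu + nu"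
    proof -
      have ee: "(- lam - c - (mu + nu)) * Eta p0 i = 0" for i
      proof -
        have "(\<Sum>k\<in>UNIV. ((- lam - c) * G p0 i k + (1 - mu) * hh p0 i k - (mu + nu) * (Eta p0 i * Eta p0 k)) * Xi p0 k) = 0"
          by (simp only: rel) simp
        moreover have "(\<Sum>k\<in>UNIV. ((- lam - c) * G p0 i k + (1 - mu) * hh p0 i k - (mu + nu) * (Eta p0 i * Eta p0 k)) * Xi p0 k)
           = (- lam - c) * (\<Sum>k\<in>UNIV. G p0 i k * Xi p0 k) + (1 - mu) * (\<Sum>k\<in>UNIV. hh p0 i k * Xi p0 k)
             - (mu + nu) * Eta p0 i * (\<Sum>k\<in>UNIV. Eta p0 k * Xi p0 k)"
          by (simp add: algebra_simps sum.distrib sum_subtractf sum_negf sum_distrib_left)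
        ultimately have "(- lam - c) * (\<Sum>k\<in>UNIV. G p0 i k * Xi p0 k) + (1 - mu) * (\<Sum>k\<in>UNIV. hh p0 i k * Xi p0 k)
             - (mu + nu) * Eta p0 i * (\<Sum>k\<in>UNIV. Eta p0 k * Xi p0 k) = 0" by simp
        then show ?thesis unfolding gxi[OF p0] hh_xi[OF p0] etaxi[OF p0] by (simp add: algebra_simps)
      qed
      then have "(\<Sum>i\<in>UNIV. (- lam - c - (mu + nu)) * Eta p0 i * Xi p0 i) = 0" by (simp only: ee) simp
      moreover have "(\<Sum>i\<in>UNIV. (- lam - c - (mu + nu)) * Eta p0 i * Xi p0 i) = (- lam - c - (mu + nu)) * (\<Sum>i\<in>UNIV. Eta p0 i * Xi p0 i)"
        by (simp add: sum_distrib_left mult.assoc)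
      ultimately show ?thesis by (simp add: etaxi p0)
    qed
    have "(mu + nu) * PP p0 i k + (1 - mu) * hh p0 i k = 0" for i k
      using rel[of i k] cc unfolding PP_def by (simp add: algebra_simps)
    then have "mu + nu = 0 \<and> 1 - mu = 0" by (rule ab_zero[OF p0])
    then show ?thesis by simp
  qed
  have T_E: "einstein U G" if "mu = 1" "nu = -1"
  proof -
    have "lam = - 2 * real n" using ls that by simp
    then show ?thesis unfolding einstein_def using that
      by (intro exI[of _ "2 * real n"]) (simp add: ricci_formula[OF sol])
  qed
  have tr: "(lam, mu, nu) = (- 2 * real n, 1, -1) \<longleftrightarrow> mu = 1 \<and> nu = -1"
  proof
    assume "mu = 1 \<and> nu = -1" then show "(lam, mu, nu) = (- 2 * real n, 1, -1)" using ls by simp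
  qed simp
  show ?thesis unfolding tr using T_LRS LRS_T E_T T_E by blast
qed



theorem mainTheorem3:
  fixes U :: "(real^'m::finite) set"
    and G Phi :: "real^'m \<Rightarrow> 'm \<Rightarrow> 'm \<Rightarrow> real"
    and Xi Eta :: "real^'m \<Rightarrow> 'm \<Rightarrow> real"
    and n :: nat and lam mu nu :: real
  assumes "n \<ge> 1" and "U \<noteq> {}"
    and "almost_contact_B_metric n U Phi Xi Eta G"
    and "sasaki_like U Phi Xi Eta G"
    and "ricci_like_soliton U G Phi Eta Xi lam mu nu"
  shows "(locally_ricci_symmetric U G \<longleftrightarrow> (lam, mu, nu) = (- 2 * real n, 1, -1))
       \<and> (locally_ricci_symmetric U G \<longleftrightarrow> einstein U G)"
  using main_aux[OF assms] .

end
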